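(* Let $s\ge 3$ and let $\kappa_s$ be the partition with $\beta(\kappa_s)=T_s$. Then $\kappa_s$ is an $(s,s+1,s+2)$-core partition of maximum size. If $s$ is even, $\kappa_s$ is the unique $(s,s+1,s+2)$-core partition of maximum size, and it is self-conjugate. If $s$ is odd, then $\kappa_s\ne\kappa_s'$ and $\kappa_s,\kappa_s'$ are exactly the two $(s,s+1,s+2)$-core partitions of maximum size, where $\kappa_s'$ denotes the conjugate partition.
   Context: An $(s,s+1,s+2)$-core is a partition with no hook length divisible by $s$, $s+1$ or $s+2$. The $\beta$-set $\beta(\lambda)$ is the set of hook lengths of the first-column boxes of $\lambda$; a partition is determined by its $\beta$-set. $T_s$ is the set of positive integers not expressible as $k_1s+k_2(s+1)+k_3(s+2)$ with $k_1,k_2,k_3$ nonnegative integers. *)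

theory Defs
  imports Main
begin

text \<open>A partition is a weakly decreasing list of positive integers (parts, largest first).
  Boxes are indexed from 0: box (i,j) with i < length la and j < la ! i.\<close>

definition is_partition :: "nat list \<Rightarrow> bool" where
  "is_partition la \<longleftrightarrow> sorted_wrt (\<ge>) la \<and> (\<forall>x\<in>set la. 0 < x)"

definition psize :: "nat list \<Rightarrow> nat" where
  "psize la = sum_list la"

definition col_len :: "nat list \<Rightarrow> nat \<Rightarrow> nat" where
  "col_len la j = length (filter (\<lambda>x. j < x) la)"

definition conjugate :: "nat list \<Rightarrow> nat list" where
  "conjugate la = map (col_len la) [0..<(if la = [] then 0 else hd la)]"

text \<open>Hook length of box (i,j): arm + leg + 1.\<close>
definition hook :: "nat list \<Rightarrow> nat \<Rightarrow> nat \<Rightarrow> nat" where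
  "hook la i j = (la ! i - j) + (col_len la j - i) - 1"

definition hook_lengths :: "nat list \<Rightarrow> nat set" where
  "hook_lengths la = {hook la i j | i j. i < length la \<and> j < la ! i}"

definition is_core :: "nat \<Rightarrow> nat list \<Rightarrow> bool" where
  "is_core t la \<longleftrightarrow> (\<forall>h\<in>hook_lengths la. \<not> t dvd h)"

definition is_sss_core :: "nat \<Rightarrow> nat list \<Rightarrow> bool" where
  "is_sss_core s la \<longleftrightarrow> is_partition la \<and> is_core s la \<and> is_core (s+1) la \<and> is_core (s+2) la"

definition beta :: "nat list \<Rightarrow> nat set" where
  "beta la = {hook la i 0 | i. i < length la}"

definition T :: "nat \<Rightarrow> nat set" where
  "T s = {n. 0 < n \<and> \<not> (\<exists>k1 k2 k3. n = k1 * s + k2 * (s+1) + k3 * (s+2))}"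

definition kappa :: "nat \<Rightarrow> nat list" where
  "kappa s = (THE la. is_partition la \<and> beta la = T s)"

end

theory Submission
  imports Defs
begin


lemma part_mono: "is_partition la \<Longrightarrow> i \<le> j \<Longrightarrow> j < length la \<Longrightarrow> la!j \<le> la!i"
  unfolding is_partition_def by (cases "i=j") (auto simp: sorted_wrt_iff_nth_less)

lemma part_pos: "is_partition la \<Longrightarrow> i < length la \<Longrightarrow> 0 < la!i"
  unfolding is_partition_def by auto

lemma col_len_card: "col_len la j = card {i. i < length la \<and> j < la!i}"
  unfolding col_len_def by (rule length_filter_conv_card)

lemma col_len_0: "is_partition la \<Longrightarrow> col_len la 0 = length la"
  unfolding col_len_def is_partition_def by (simp add: filter_id_conv)

lemma downclosed_eq:
  fixes S :: "nat set"
  assumes "finite S" "\<And>m m'. m \<in> S \<Longrightarrow> m' \<le> m \<Longrightarrow> m' \<in> S"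
  shows "S = {..<card S}"
proof (cases "S = {}")
  case True then show ?thesis by simp
next
  case False
  define M where "M = Max S"
  have "M \<in> S" using False assms(1) M_def by simp
  have "S = {..M}"
  proof
    show "S \<subseteq> {..M}" using assms(1) M_def by auto
    show "{..M} \<subseteq> S" using \<open>M \<in> S\<close> assms(2) by auto
  qed
  then show ?thesis by auto
qed

lemma col_set:
  assumes "is_partition la"
  shows "{i. i < length la \<and> j < la!i} = {..<col_len la j}"
proof -
  have "{i. i < length la \<and> j < la!i} = {..<card {i. i < length la \<and> j < la!i}}"
    apply (rule downclosed_eq)
     apply simp
  proof -
    fix m m' assume "m \<in> {i. i < length la \<and> j < la!i}" "m' \<le> m"
    then show "m' \<in> {i. i < length la \<and> j < la!i}"
      using part_mono[OF assms, of m' m] by auto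
  qed
  then show ?thesis by (simp add: col_len_card)
qed

lemma col_iff:
  assumes "is_partition la" "m < length la"
  shows "j < la!m \<longleftrightarrow> m < col_len la j"
  using col_set[OF assms(1), of j] assms(2) by blast

lemma col_le: "col_len la j \<le> length la"
  unfolding col_len_def by simp

definition bt :: "nat list \<Rightarrow> nat \<Rightarrow> nat" where
  "bt la i = la!i + (length la - 1 - i)"

lemma hook0: "is_partition la \<Longrightarrow> i < length la \<Longrightarrow> hook la i 0 = bt la i"
  by (simp add: hook_def col_len_0 bt_def)

lemma beta_bt: assumes "is_partition la" shows "beta la = bt la ` {..<length la}"
proof (rule set_eqI)
  fix x show "x \<in> beta la \<longleftrightarrow> x \<in> bt la ` {..<length la}"
    unfolding beta_def using hook0[OF assms] by auto metis
qed

lemma bt_strict: "is_partition la \<Longrightarrow> i < j \<Longrightarrow> j < length la \<Longrightarrow> bt la j < bt la i"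
  using part_mono[of la i j] unfolding bt_def by auto

lemma bt_ge: "is_partition la \<Longrightarrow> i < length la \<Longrightarrow> length la - i \<le> bt la i"
  using part_pos[of la i] unfolding bt_def by auto

lemma bt_inj: "is_partition la \<Longrightarrow> inj_on (bt la) {..<length la}"
proof (rule inj_onI)
  fix x y assume "is_partition la" "x \<in> {..<length la}" "y \<in> {..<length la}" "bt la x = bt la y"
  then show "x = y" using bt_strict[of la x y] bt_strict[of la y x] by (cases x y rule: linorder_cases) auto
qed

lemma card_beta: "is_partition la \<Longrightarrow> card (beta la) = length la"
  by (simp add: beta_bt bt_inj card_image)

lemma beta_pos: "is_partition la \<Longrightarrow> x \<in> beta la \<Longrightarrow> 0 < x"
  using bt_ge by (fastforce simp: beta_bt)

lemma hook_form:
  assumes P: "is_partition la" and i: "i < length la" and j: "j < la!i"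
  shows "\<exists>c. c \<notin> beta la \<and> c < bt la i \<and> hook la i j = bt la i - c"
proof -
  define n where "n = length la"
  define r where "r = col_len la j"
  have rn: "r \<le> n" unfolding r_def n_def by (rule col_le)
  have iff: "\<And>m. m < n \<Longrightarrow> (j < la!m \<longleftrightarrow> m < r)" unfolding n_def r_def using col_iff[OF P] by blast
  have ir: "i < r" using iff i j n_def by blast
  define c where "c = n + j - r"
  have hk: "hook la i j = (la!i - j) + (r - i) - 1" unfolding hook_def r_def by simp
  have bti: "bt la i = la!i + (n - 1 - i)" unfolding bt_def n_def by simp
  have h1: "hook la i j = bt la i - c" using hk bti ir rn j i unfolding c_def n_def by simp
  have h2: "c < bt la i" using hk bti ir rn j i unfolding c_def n_def by simp
  have h3: "c \<notin> beta la"
  proof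
    assume "c \<in> beta la"
    then obtain m where m: "m < n" "c = bt la m" using beta_bt[OF P] n_def by auto
    have btm: "bt la m = la!m + (n - 1 - m)" unfolding bt_def n_def by simp
    show False
    proof (cases "m < r")
      case True
      then have "j < la!m" using iff m by blast
      then show False using m btm True rn unfolding c_def by simp
    next
      case False
      then have "la!m \<le> j" using iff m by (meson not_le)
      then show False using m btm False rn unfolding c_def by simp
    qed
  qed
  show ?thesis using h1 h2 h3 by blast
qed

lemma hook_exists:
  assumes P: "is_partition la" and i: "i < length la" and c: "c \<notin> beta la" "c < bt la i"
  shows "bt la i - c \<in> hook_lengths la"
proof -
  define n where "n = length la"
  define S where "S = {m. m < n \<and> c < bt la m}"
  have Sd: "S = {..<card S}"
  proof (rule downclosed_eq)
    show "finite S" unfolding S_def by simp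
    fix m m' assume "m \<in> S" "m' \<le> m"
    then show "m' \<in> S" unfolding S_def
      using bt_strict[OF P, of m' m] n_def by (cases "m' = m") auto
  qed
  define r where "r = card S"
  have Siff: "\<And>m. m < r \<longleftrightarrow> m < n \<and> c < bt la m"
  proof -
    fix m
    have "m < r \<longleftrightarrow> m \<in> S" using Sd r_def by (metis lessThan_iff)
    then show "m < r \<longleftrightarrow> m < n \<and> c < bt la m" unfolding S_def by simp
  qed
  have ir: "i < r" using Siff[of i] i c(2) n_def by simp
  have rn: "r \<le> n"
  proof (rule ccontr)
    assume "\<not> r \<le> n" then have "n < r" by simp
    then show False using Siff[of n] by simp
  qed
  have above: "\<And>m. r \<le> m \<Longrightarrow> m < n \<Longrightarrow> bt la m < c"
  proof -
    fix m assume a: "r \<le> m" "m < n"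
    then have "\<not> c < bt la m" using Siff[of m] by simp
    moreover have "bt la m \<noteq> c" using c(1) a(2) beta_bt[OF P] n_def by auto
    ultimately show "bt la m < c" by simp
  qed
  have nrc: "n - r \<le> c"
  proof (cases "r < n")
    case True
    have "n - r \<le> bt la r" using bt_ge[OF P, of r] True n_def by simp
    then show ?thesis using above[of r] True by simp
  next
    case False then show ?thesis by simp
  qed
  define j where "j = c + r - n"
  have btf: "\<And>m. bt la m = la!m + (n - 1 - m)" unfolding bt_def n_def by simp
  have jiff: "\<And>m. m < n \<Longrightarrow> (j < la!m \<longleftrightarrow> m < r)"
  proof -
    fix m assume m: "m < n"
    show "(j < la!m \<longleftrightarrow> m < r)"
    proof
      assume jm: "j < la!m"
      show "m < r"
      proof (rule ccontr)
        assume "\<not> m < r"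
        then have rm: "r \<le> m" by simp
        have "la!m \<le> la!r" using part_mono[OF P rm] m n_def by simp
        moreover have "bt la r < c" using above[of r] rm m by simp
        ultimately show False using jm btf[of r] rm m nrc unfolding j_def by simp
      qed
    next
      assume mr: "m < r"
      then have r1: "r - 1 < n" "m \<le> r - 1" using rn by auto
      have "la!(r-1) \<le> la!m" using part_mono[OF P r1(2)] r1(1) n_def by simp
      moreover have "c < bt la (r-1)" using Siff[of "r-1"] mr by simp
      ultimately show "j < la!m" using btf[of "r-1"] mr rn nrc unfolding j_def by simp
    qed
  qed
  have col: "col_len la j = r"
  proof -
    have "{m. m < length la \<and> j < la!m} = {..<r}" using jiff rn n_def by auto
    then show ?thesis using col_set[OF P, of j] by simp
  qed
  have ji: "j < la!i" using col col_iff[OF P i] ir by simp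
  have hk: "hook la i j = (la!i - j) + (r - i) - 1" unfolding hook_def col by simp
  have "hook la i j = bt la i - c"
    using hk ji c(2) btf[of i] ir rn nrc i n_def unfolding j_def by linarith
  then show ?thesis unfolding hook_lengths_def using i ji by (metis (mono_tags, lifting) mem_Collect_eq)
qed



lemma core_iff:
  assumes P: "is_partition la" and t: "0 < t"
  shows "is_core t la \<longleftrightarrow> (\<forall>x\<in>beta la. t \<le> x \<longrightarrow> x - t \<in> beta la)"
proof
  assume core: "is_core t la"
  show "\<forall>x\<in>beta la. t \<le> x \<longrightarrow> x - t \<in> beta la"
  proof (intro ballI impI)
    fix x assume x: "x \<in> beta la" "t \<le> x"
    show "x - t \<in> beta la"
    proof (rule ccontr)
      assume nb: "x - t \<notin> beta la"
      obtain i where i: "i < length la" "x = bt la i" using x(1) beta_bt[OF P] by auto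
      have "bt la i - (x - t) \<in> hook_lengths la"
        by (rule hook_exists[OF P i(1)]) (use nb i t x in auto)
      then have "t \<in> hook_lengths la" using i x by simp
      then show False using core unfolding is_core_def by auto
    qed
  qed
next
  assume cl: "\<forall>x\<in>beta la. t \<le> x \<longrightarrow> x - t \<in> beta la"
  show "is_core t la" unfolding is_core_def
  proof
    fix h assume "h \<in> hook_lengths la"
    then obtain i j where ij: "i < length la" "j < la!i" "h = hook la i j"
      unfolding hook_lengths_def by auto
    obtain c where c: "c \<notin> beta la" "c < bt la i" "h = bt la i - c"
      using hook_form[OF P ij(1) ij(2)] ij(3) by auto
    show "\<not> t dvd h"
    proof
      assume "t dvd h"
      then obtain m where m: "h = t * m" by auto
      have mem: "\<And>m'. m' \<le> m \<Longrightarrow> bt la i - m' * t \<in> beta la"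
      proof -
        fix m' show "m' \<le> m \<Longrightarrow> bt la i - m' * t \<in> beta la"
        proof (induction m')
          case 0
          then show ?case using beta_bt[OF P] ij(1) by simp
        next
          case (Suc k)
          then have mem: "bt la i - k * t \<in> beta la" by simp
          have "k * t + t \<le> m * t" using Suc.prems by (metis add.commute mult_Suc mult_le_mono1)
          then have "t \<le> bt la i - k * t" using c m by (simp add: algebra_simps)
          then have "bt la i - k * t - t \<in> beta la" using cl mem by blast
          then show ?case by (simp add: algebra_simps)
        qed
      qed
      have "bt la i - m * t = c" using c m by (simp add: algebra_simps)
      then show False using mem[of m] c(1) by simp
    qed
  qed
qed

lemma sum_reflect_gauss: "2 * (\<Sum>i<n. (n - Suc i)) = n * (n - 1::nat)"
proof (induction n)
  case 0 then show ?case by simp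
next
  case (Suc n)
  have "(\<Sum>i<Suc n. (Suc n - Suc i)) = (Suc n - Suc 0) + (\<Sum>i<n. (Suc n - Suc (Suc i)))"
    by (rule sum.lessThan_Suc_shift)
  then have "(\<Sum>i<Suc n. (Suc n - Suc i)) = n + (\<Sum>i<n. (n - Suc i))" by simp
  then show ?case using Suc by (cases n) (auto simp: algebra_simps)
qed

lemma psize_beta:
  assumes P: "is_partition la"
  shows "2 * \<Sum>(beta la) = 2 * psize la + length la * (length la - 1)"
proof -
  define n where "n = length la"
  have "\<Sum>(beta la) = (\<Sum>i<n. bt la i)"
    unfolding beta_bt[OF P] n_def by (simp add: sum.reindex[OF bt_inj[OF P]])
  also have "\<dots> = (\<Sum>i<n. la!i) + (\<Sum>i<n. (n - 1 - i))"
    unfolding bt_def n_def by (rule sum.distrib)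
  also have "(\<Sum>i<n. la!i) = psize la"
    unfolding psize_def n_def by (simp add: sum_list_sum_nth atLeast0LessThan)
  finally show ?thesis using sum_reflect_gauss[of n] n_def by simp
qed

lemma strict_dec_gap:
  assumes "sorted_wrt (\<lambda>x y. y < x) (xs::nat list)"
  shows "i + d < length xs \<Longrightarrow> xs!(i+d) + d \<le> xs!i"
proof (induction d)
  case 0 then show ?case by simp
next
  case (Suc d)
  have "xs!(i + Suc d) < xs!(i+d)" using assms Suc.prems by (simp add: sorted_wrt_iff_nth_less)
  then show ?case using Suc by simp
qed

lemma bt_list:
  assumes P: "is_partition la"
  shows "sorted_wrt (<) (rev (map (bt la) [0..<length la]))"
  unfolding sorted_wrt_rev using bt_strict[OF P]
  by (auto simp: sorted_wrt_iff_nth_less)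

lemma beta_inj:
  assumes P: "is_partition la" and Q: "is_partition mu" and E: "beta la = beta mu"
  shows "la = mu"
proof -
  define xs where "xs = rev (map (bt la) [0..<length la])"
  define ys where "ys = rev (map (bt mu) [0..<length mu])"
  have "set xs = beta la" unfolding xs_def beta_bt[OF P] by auto
  moreover have "set ys = beta mu" unfolding ys_def beta_bt[OF Q] by auto
  ultimately have "set xs = set ys" using E by simp
  moreover have "sorted xs" "distinct xs" using bt_list[OF P] unfolding xs_def strict_sorted_iff by auto
  moreover have "sorted ys" "distinct ys" using bt_list[OF Q] unfolding ys_def strict_sorted_iff by auto
  ultimately have "xs = ys" by (intro sorted_distinct_set_unique) auto
  then have eq: "map (bt la) [0..<length la] = map (bt mu) [0..<length mu]" unfolding xs_def ys_def by simp
  then have len: "length la = length mu" using length_map length_upt by (metis diff_zero)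
  have "\<And>i. i < length la \<Longrightarrow> bt la i = bt mu i"
  proof -
    fix i assume i: "i < length la"
    have "map (bt la) [0..<length la] ! i = map (bt mu) [0..<length mu] ! i" using eq by simp
    then show "bt la i = bt mu i" using i len by simp
  qed
  then have "\<And>i. i < length la \<Longrightarrow> la!i = mu!i" unfolding bt_def using len by fastforce
  then show ?thesis using len by (simp add: nth_equalityI)
qed

lemma beta_exists:
  assumes F: "finite B" and pos: "\<And>x. x \<in> B \<Longrightarrow> 0 < x"
  shows "\<exists>la. is_partition la \<and> beta la = B"
proof -
  define xs where "xs = rev (sorted_list_of_set B)"
  define n where "n = length xs"
  have sd: "sorted_wrt (\<lambda>x y. y < x) xs" unfolding xs_def sorted_wrt_rev
    using sorted_list_of_set.strict_sorted_key_list_of_set by blast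
  have sx: "set xs = B" unfolding xs_def using F by simp
  have gap: "\<And>i j. i \<le> j \<Longrightarrow> j < n \<Longrightarrow> xs!j + (j - i) \<le> xs!i"
    using strict_dec_gap[OF sd] n_def by (metis le_add_diff_inverse)
  have low: "\<And>i. i < n \<Longrightarrow> n - i \<le> xs!i"
  proof -
    fix i assume i: "i < n"
    have "xs!(n-1) \<in> set xs" using i n_def by simp
    then have "0 < xs!(n-1)" using pos sx by blast
    then show "n - i \<le> xs!i" using gap[of i "n-1"] i by linarith
  qed
  define la where "la = map (\<lambda>i. xs!i - (n - 1 - i)) [0..<n]"
  have len: "length la = n" unfolding la_def by simp
  have lai: "\<And>i. i < n \<Longrightarrow> la!i = xs!i - (n - 1 - i)" unfolding la_def by simp
  have P: "is_partition la" unfolding is_partition_def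
  proof
    show "sorted_wrt (\<ge>) la" unfolding sorted_wrt_iff_nth_less len
    proof (intro allI impI)
      fix i j assume ij: "i < j" "j < n"
      then show "la!j \<le> la!i" using lai[of i] lai[of j] gap[of i j] low[of j] by simp
    qed
    show "\<forall>x\<in>set la. 0 < x"
    proof
      fix x assume "x \<in> set la"
      then obtain i where "i < n" "x = la!i" using len by (metis in_set_conv_nth)
      then show "0 < x" using lai low by fastforce
    qed
  qed
  have "\<And>i. i < n \<Longrightarrow> bt la i = xs!i" unfolding bt_def len using lai low by fastforce
  then have "beta la = (\<lambda>i. xs!i) ` {..<n}" unfolding beta_bt[OF P] len by auto
  also have "\<dots> = set xs" unfolding n_def by (auto simp: in_set_conv_nth)
  finally show ?thesis using P sx by blast
qed



lemma conj_len: "length (conjugate la) = (if la = [] then 0 else la!0)"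
  unfolding conjugate_def by (simp add: hd_conv_nth)

lemma conj_nth: "j < length (conjugate la) \<Longrightarrow> conjugate la ! j = col_len la j"
  unfolding conjugate_def by (auto simp: hd_conv_nth split: if_splits)

lemma col_len_mono: "j \<le> j' \<Longrightarrow> col_len la j' \<le> col_len la j"
  unfolding col_len_card by (rule card_mono) auto

lemma col_len_pos: "is_partition la \<Longrightarrow> la \<noteq> [] \<Longrightarrow> j < la!0 \<Longrightarrow> 0 < col_len la j"
  unfolding col_len_card by (subst card_gt_0_iff) auto

lemma conj_partition:
  assumes P: "is_partition la"
  shows "is_partition (conjugate la)"
  unfolding is_partition_def
proof
  show "sorted_wrt (\<ge>) (conjugate la)" unfolding sorted_wrt_iff_nth_less
  proof (intro allI impI)
    fix i j assume "i < j" "j < length (conjugate la)"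
    then show "conjugate la ! j \<le> conjugate la ! i"
      using conj_nth[of i la] conj_nth[of j la] col_len_mono[of i j la] by simp
  qed
  show "\<forall>x\<in>set (conjugate la). 0 < x"
  proof
    fix x assume "x \<in> set (conjugate la)"
    then obtain j where j: "j < length (conjugate la)" "x = conjugate la ! j" by (metis in_set_conv_nth)
    then have "la \<noteq> []" "j < la!0" using conj_len[of la] by (auto split: if_splits)
    then show "0 < x" using j conj_nth col_len_pos[OF P] by simp
  qed
qed

lemma col_len_conj:
  assumes P: "is_partition la" and i: "i < length la"
  shows "col_len (conjugate la) i = la!i"
proof -
  have ne: "la \<noteq> []" using i by auto
  have "{j. j < length (conjugate la) \<and> i < conjugate la ! j} = {j. j < la!0 \<and> i < col_len la j}"
    using conj_len[of la] conj_nth[of _ la] ne by auto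
  also have "\<dots> = {j. j < la!0 \<and> j < la!i}" using col_iff[OF P i] by auto
  also have "\<dots> = {..<la!i}" using part_mono[OF P, of 0 i] i by auto
  finally show ?thesis unfolding col_len_card by simp
qed

lemma conj_hooks:
  assumes P: "is_partition la"
  shows "hook_lengths (conjugate la) \<subseteq> hook_lengths la"
proof
  fix h assume "h \<in> hook_lengths (conjugate la)"
  then obtain i j where ij: "i < length (conjugate la)" "j < conjugate la ! i" "h = hook (conjugate la) i j"
    unfolding hook_lengths_def by auto
  have ci: "conjugate la ! i = col_len la i" using conj_nth ij(1) by simp
  have jn: "j < length la" using ij(2) ci col_le[of la i] by simp
  have cj: "col_len (conjugate la) j = la!j" using col_len_conj[OF P jn] .
  have il: "i < la!j" using col_iff[OF P jn] ij(2) ci by simp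
  have "h = hook la j i" unfolding ij(3) hook_def ci cj by simp
  then show "h \<in> hook_lengths la" unfolding hook_lengths_def using jn il by blast
qed

lemma conj_core: "is_partition la \<Longrightarrow> is_core t la \<Longrightarrow> is_core t (conjugate la)"
  unfolding is_core_def using conj_hooks by blast

lemma conj_sss: "is_sss_core s la \<Longrightarrow> is_sss_core s (conjugate la)"
  unfolding is_sss_core_def using conj_core conj_partition by blast

lemma col_len_sum: "col_len la j = (\<Sum>i<length la. of_bool (j < la!i))"
proof -
  have "{i. i < length la \<and> j < la!i} = {..<length la} \<inter> {i. j < la!i}" by auto
  then show ?thesis unfolding col_len_card by simp
qed

lemma conj_psize:
  assumes P: "is_partition la"
  shows "psize (conjugate la) = psize la"
proof (cases "la = []")
  case True then show ?thesis unfolding conjugate_def psize_def by simp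
next
  case False
  define L where "L = la!0"
  define n where "n = length la"
  have "psize (conjugate la) = (\<Sum>j<L. col_len la j)"
    unfolding psize_def conjugate_def L_def using False by (simp add: hd_conv_nth sum_list_sum_nth atLeast0LessThan)
  also have "\<dots> = (\<Sum>j<L. \<Sum>i<n. (of_bool (j < la!i)::nat))" unfolding col_len_sum n_def by simp
  also have "\<dots> = (\<Sum>i<n. \<Sum>j<L. (of_bool (j < la!i)::nat))" by (rule sum.swap)
  also have "\<dots> = (\<Sum>i<n. la!i)"
  proof (rule sum.cong)
    fix i assume "i \<in> {..<n}"
    then have "la!i \<le> L" using part_mono[OF P, of 0 i] n_def L_def by simp
    then have "{..<L} \<inter> {j. j < la!i} = {..<la!i}" by auto
    then show "(\<Sum>j<L. (of_bool (j < la!i)::nat)) = la!i" by simp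
  qed simp
  also have "\<dots> = psize la" unfolding psize_def n_def by (simp add: sum_list_sum_nth atLeast0LessThan)
  finally show ?thesis .
qed



lemma rep_iff:
  "(\<exists>k1 k2 k3. n = k1*s + k2*(s+1) + k3*(s+2)) \<longleftrightarrow> (\<exists>m. m*s \<le> n \<and> n \<le> m*(s+2::nat))"
proof
  assume "\<exists>k1 k2 k3. n = k1*s + k2*(s+1) + k3*(s+2)"
  then obtain k1 k2 k3 where n: "n = k1*s + k2*(s+1) + k3*(s+2)" by blast
  have "n = (k1+k2+k3)*s + k2 + 2*k3" using n by (simp add: algebra_simps)
  moreover have "(k1+k2+k3)*(s+2) = (k1+k2+k3)*s + 2*k1 + 2*k2 + 2*k3" by (simp add: algebra_simps)
  ultimately show "\<exists>m. m*s \<le> n \<and> n \<le> m*(s+2)" by (intro exI[of _ "k1+k2+k3"]) auto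
next
  assume "\<exists>m. m*s \<le> n \<and> n \<le> m*(s+2)"
  then obtain m where m: "m*s \<le> n" "n \<le> m*(s+2)" by blast
  define r where "r = n - m*s"
  have r: "n = m*s + r" "r \<le> 2*m" using m unfolding r_def by (auto simp: algebra_simps)
  define k3 where "k3 = r div 2"
  define k2 where "k2 = r mod 2"
  have rr: "r = 2*k3 + k2" "k2 \<le> 1" unfolding k2_def k3_def by auto
  have le: "k2 + k3 \<le> m" using r(2) rr by (cases "k2 = 0") auto
  define k1 where "k1 = m - k2 - k3"
  have "n = k1*s + k2*(s+1) + k3*(s+2)"
  proof -
    have "m = k1 + k2 + k3" using le k1_def by simp
    then show ?thesis using r(1) rr(1) by (simp add: algebra_simps)
  qed
  then show "\<exists>k1 k2 k3. n = k1*s + k2*(s+1) + k3*(s+2)" by blast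
qed

lemma T_char:
  assumes s: "0 < s"
  shows "n \<in> T s \<longleftrightarrow> n div (s+1) < n mod (s+1) \<and> n mod (s+1) + n div (s+1) < s"
proof -
  define k where "k = n div (s+1)"
  define p where "p = n mod (s+1)"
  have n: "n = k*(s+1) + p" unfolding k_def p_def by (rule div_mult_mod_eq[symmetric])
  have ps: "p \<le> s" unfolding p_def by (metis less_Suc_eq_le mod_less_divisor zero_less_Suc Suc_eq_plus1)
  have Tdef: "n \<in> T s \<longleftrightarrow> 0 < n \<and> \<not> (\<exists>m. m*s \<le> n \<and> n \<le> m*(s+2))"
    unfolding T_def using rep_iff[of n s] by auto
  show ?thesis unfolding k_def[symmetric] p_def[symmetric] Tdef
  proof
    assume a: "0 < n \<and> \<not> (\<exists>m. m*s \<le> n \<and> n \<le> m*(s+2))"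
    show "k < p \<and> p + k < s"
    proof (rule ccontr)
      assume "\<not> (k < p \<and> p + k < s)"
      then consider "p \<le> k" | "s \<le> p + k" by linarith
      then show False
      proof cases
        case 1
        have "k*s \<le> n" "n \<le> k*(s+2)" using n 1 by (auto simp: algebra_simps)
        then show False using a by blast
      next
        case 2
        have "(k+1)*s \<le> n" using n 2 by (simp add: algebra_simps)
        moreover have "n \<le> (k+1)*(s+2)" using n ps by (simp add: algebra_simps)
        ultimately show False using a by blast
      qed
    qed
  next
    assume a: "k < p \<and> p + k < s"
    show "0 < n \<and> \<not> (\<exists>m. m*s \<le> n \<and> n \<le> m*(s+2))"
    proof (intro conjI notI)
      show "0 < n" using n a by simp
      assume "\<exists>m. m*s \<le> n \<and> n \<le> m*(s+2)"
      then obtain m where m: "m*s \<le> n" "n \<le> m*(s+2)" by blast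
      show False
      proof (cases "m \<le> k")
        case True
        then have "m*(s+2) \<le> k*(s+2)" by (rule mult_le_mono1)
        then show False using m n a by (simp add: algebra_simps)
      next
        case False
        then have "(k+1)*s \<le> m*s" by (intro mult_le_mono1) simp
        then show False using m n a by (simp add: algebra_simps)
      qed
    qed
  qed
qed

definition PT :: "nat \<Rightarrow> (nat \<times> nat) set" where
  "PT s = {(k,p). k < p \<and> p + k < s}"

definition vv :: "nat \<Rightarrow> nat \<times> nat \<Rightarrow> nat" where
  "vv s kp = fst kp * (s+1) + snd kp"

lemma divm_aux: "p < (m::nat) \<Longrightarrow> (k*m+p) div m = k"
  by simp
lemma modm_aux: "p < (m::nat) \<Longrightarrow> (k*m+p) mod m = p"
  by simp
lemma vv_div: "p \<le> s \<Longrightarrow> vv s (k,p) div (s+1) = k"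
  unfolding vv_def fst_conv snd_conv by (rule divm_aux) simp
lemma vv_mod: "p \<le> s \<Longrightarrow> vv s (k,p) mod (s+1) = p"
  unfolding vv_def fst_conv snd_conv by (rule modm_aux) simp

lemma PT_le: "(k,p) \<in> PT s \<Longrightarrow> p \<le> s" unfolding PT_def by auto

lemma vv_inj: "inj_on (vv s) (PT s)"
proof (rule inj_onI)
  fix x y assume xy: "x \<in> PT s" "y \<in> PT s" "vv s x = vv s y"
  obtain k p k' p' where kp: "x = (k,p)" "y = (k',p')" by (cases x, cases y)
  have le: "p \<le> s" "p' \<le> s" using xy(1,2) kp PT_le by auto
  have e: "vv s (k,p) = vv s (k',p')" using xy(3) kp by simp
  have "k = k'" using arg_cong[OF e, of "\<lambda>z. z div (s+1)"] vv_div[OF le(1)] vv_div[OF le(2)] by simp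
  moreover have "p = p'" using arg_cong[OF e, of "\<lambda>z. z mod (s+1)"] vv_mod[OF le(1)] vv_mod[OF le(2)] by simp
  ultimately show "x = y" using kp by simp
qed

lemma T_eq: "0 < s \<Longrightarrow> T s = vv s ` PT s"
proof (rule set_eqI)
  fix n assume s: "0 < s"
  show "n \<in> T s \<longleftrightarrow> n \<in> vv s ` PT s"
  proof
    assume "n \<in> T s"
    then have "(n div (s+1), n mod (s+1)) \<in> PT s" using T_char[OF s] unfolding PT_def by auto
    moreover have "n = vv s (n div (s+1), n mod (s+1))" unfolding vv_def fst_conv snd_conv by (rule div_mult_mod_eq[symmetric])
    ultimately show "n \<in> vv s ` PT s" by blast
  next
    assume "n \<in> vv s ` PT s"
    then obtain k p where kp: "(k,p) \<in> PT s" "n = vv s (k,p)" by auto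
    then show "n \<in> T s" using T_char[OF s] vv_div[of p s k] vv_mod[of p s k] PT_le[OF kp(1)]
      unfolding PT_def by auto
  qed
qed

lemma vv_in_T: assumes "0 < s" "k < p" "p + k < s" shows "k*(s+1)+p \<in> T s"
proof -
  have "(k,p) \<in> PT s" using assms unfolding PT_def by simp
  then have "vv s (k,p) \<in> T s" using T_eq[OF assms(1)] by blast
  then show ?thesis unfolding vv_def by simp
qed

lemma PT_finite: "finite (PT s)"
proof -
  have "PT s \<subseteq> {..<s} \<times> {..<s}" unfolding PT_def by auto
  then show ?thesis by (rule finite_subset) simp
qed

lemma T_finite: "0 < s \<Longrightarrow> finite (T s)"
  using T_eq PT_finite by simp

definition RR :: "nat \<Rightarrow> nat set \<Rightarrow> nat \<Rightarrow> nat set" where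
  "RR s X k = {p. k < p \<and> p + k < s \<and> k*(s+1) + p \<in> X}"

lemma RR_sub: "RR s X k \<subseteq> {k+1..<s-k}"
proof
  fix p assume "p \<in> RR s X k"
  then have "k < p" "p + k < s" unfolding RR_def by auto
  then show "p \<in> {k+1..<s-k}" by simp
qed

lemma RR_finite: "finite (RR s X k)" by (rule finite_subset[OF RR_sub]) simp

lemma RR_card_le: "card (RR s X k) \<le> s - 1 - 2*k"
proof -
  have "card (RR s X k) \<le> card {k+1..<s-k}" by (rule card_mono[OF _ RR_sub]) simp
  then show ?thesis by simp
qed

lemma RR_T: assumes "0 < s" shows "RR s (T s) k = {k+1..<s-k}"
proof
  show "RR s (T s) k \<subseteq> {k+1..<s-k}" by (rule RR_sub)
  show "{k+1..<s-k} \<subseteq> RR s (T s) k"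
  proof
    fix p assume "p \<in> {k+1..<s-k}"
    then have "k < p" "p + k < s" by auto
    then show "p \<in> RR s (T s) k" unfolding RR_def using vv_in_T[OF assms] by simp
  qed
qed

definition closed3 :: "nat \<Rightarrow> nat set \<Rightarrow> bool" where
  "closed3 s X \<longleftrightarrow> (\<forall>x\<in>X. \<forall>t\<in>{s, s+1, s+2}. t \<le> x \<longrightarrow> x - t \<in> X)"

lemma RR_erode:
  assumes s: "0 < s" and XT: "X \<subseteq> T s" and cl: "closed3 s X" and p: "p \<in> RR s X (k+1)"
  shows "p - 1 \<in> RR s X k \<and> p \<in> RR s X k \<and> p + 1 \<in> RR s X k"
proof -
  have pk: "k + 1 < p" "p + (k+1) < s" "(k+1)*(s+1) + p \<in> X" using p unfolding RR_def by auto
  define x where "x = (k+1)*(s+1) + p"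
  have xX: "x \<in> X" using pk x_def by simp
  have e1: "x - (s+1) = k*(s+1) + p" unfolding x_def by (simp add: algebra_simps)
  have e2: "x - s = k*(s+1) + (p+1)" unfolding x_def by (simp add: algebra_simps)
  have e3: "x - (s+2) = k*(s+1) + (p-1)" unfolding x_def using pk by (simp add: algebra_simps)
  have "s + 2 \<le> x" unfolding x_def using pk by (simp add: algebra_simps)
  then have m: "x - (s+1) \<in> X" "x - s \<in> X" "x - (s+2) \<in> X" using cl xX unfolding closed3_def by auto
  show ?thesis unfolding RR_def using m e1 e2 e3 pk by auto
qed

lemma RR_card_step:
  assumes s: "0 < s" and XT: "X \<subseteq> T s" and cl: "closed3 s X" and ne: "0 < card (RR s X (k+1))"
  shows "card (RR s X (k+1)) + 2 \<le> card (RR s X k)"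
proof -
  define R where "R = RR s X (k+1)"
  have fin: "finite R" unfolding R_def by (rule RR_finite)
  have Rne: "R \<noteq> {}" using ne R_def by auto
  define a where "a = Min R"
  define b where "b = Max R"
  have aR: "a \<in> R" "b \<in> R" using fin Rne a_def b_def by auto
  have a1: "0 < a" using aR unfolding R_def RR_def by auto
  have sub: "insert (a-1) (insert (b+1) R) \<subseteq> RR s X k"
    using RR_erode[OF s XT cl] aR unfolding R_def by blast
  have n1: "a - 1 \<notin> R"
  proof
    assume "a - 1 \<in> R" then have "a \<le> a - 1" using fin a_def by simp
    then show False using a1 by simp
  qed
  have n2: "b + 1 \<notin> R"
  proof
    assume "b + 1 \<in> R" then have "b + 1 \<le> b" using fin b_def by simp
    then show False by simp
  qed
  have "a \<le> b" using fin aR a_def by simp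
  then have n3: "a - 1 \<noteq> b + 1" by simp
  have "card (insert (a-1) (insert (b+1) R)) = card R + 2" using fin n1 n2 n3 by simp
  moreover have "card (insert (a-1) (insert (b+1) R)) \<le> card (RR s X k)"
    using sub RR_finite card_mono by blast
  ultimately show ?thesis unfolding R_def by simp
qed

lemma top_sum:
  "finite R \<Longrightarrow> R \<subseteq> {..<m} \<Longrightarrow>
     2 * \<Sum>R + card R * (card R + 1) \<le> 2 * m * card R \<and>
     (2 * \<Sum>R + card R * (card R + 1) = 2 * m * card R \<longleftrightarrow> R = {m - card R..<m})"
proof (induction m arbitrary: R)
  case 0 then show ?case by simp
next
  case (Suc m)
  show ?case
  proof (cases "m \<in> R")
    case True
    define R' where "R' = R - {m}"
    have R'f: "finite R'" "R' \<subseteq> {..<m}" using Suc.prems unfolding R'_def by auto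
    have cR: "card R = card R' + 1" using card.remove[OF Suc.prems(1) True] unfolding R'_def by simp
    have sR: "\<Sum>R = \<Sum>R' + m" using sum.remove[OF Suc.prems(1) True, of id] unfolding R'_def by simp
    have IH: "2 * \<Sum>R' + card R' * (card R' + 1) \<le> 2 * m * card R'"
      "(2 * \<Sum>R' + card R' * (card R' + 1) = 2 * m * card R') = (R' = {m - card R'..<m})"
      using Suc.IH[OF R'f] by auto
    have c'm: "card R' \<le> m" using card_mono[OF _ R'f(2)] by simp
    have ineq: "2 * \<Sum>R + card R * (card R + 1) \<le> 2 * Suc m * card R"
      using IH(1) unfolding cR sR by (simp add: algebra_simps)
    have eqiff: "(2 * \<Sum>R + card R * (card R + 1) = 2 * Suc m * card R) = (2 * \<Sum>R' + card R' * (card R' + 1) = 2 * m * card R')"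
      unfolding cR sR by (simp add: algebra_simps)
    have "R = insert m R'" using True unfolding R'_def by auto
    moreover have "(R' = {m - card R'..<m}) \<longleftrightarrow> (insert m R' = {Suc m - card R..<Suc m})"
    proof -
      have e: "Suc m - card R = m - card R'" unfolding cR using c'm by simp
      have I: "{Suc m - card R..<Suc m} = insert m {m - card R'..<m}" unfolding e by (simp add: atLeastLessThanSuc)
      have "m \<notin> R'" unfolding R'_def by simp
      moreover have "m \<notin> {m - card R'..<m}" by simp
      ultimately show ?thesis unfolding I using insert_ident by metis
    qed
    ultimately show ?thesis using ineq eqiff IH(2) by simp
  next
    case False
    have Rf: "finite R" "R \<subseteq> {..<m}" using Suc.prems False by (auto simp: less_Suc_eq)
    have IH: "2 * \<Sum>R + card R * (card R + 1) \<le> 2 * m * card R"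
      "(2 * \<Sum>R + card R * (card R + 1) = 2 * m * card R) = (R = {m - card R..<m})"
      using Suc.IH[OF Rf] by auto
    have ineq: "2 * \<Sum>R + card R * (card R + 1) \<le> 2 * Suc m * card R" using IH(1) by simp
    have "(2 * \<Sum>R + card R * (card R + 1) = 2 * Suc m * card R) \<longleftrightarrow> R = {}"
    proof
      assume h: "2 * \<Sum>R + card R * (card R + 1) = 2 * Suc m * card R"
      then have "card R = 0" using IH(1) by simp
      then show "R = {}" using Rf by simp
    qed simp
    moreover have "R = {Suc m - card R..<Suc m} \<longleftrightarrow> R = {}"
    proof
      assume h: "R = {Suc m - card R..<Suc m}"
      show "R = {}"
      proof (rule ccontr)
        assume "R \<noteq> {}"
        then have "0 < card R" using Rf by auto
        then have "m \<in> {Suc m - card R..<Suc m}" by auto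
        then show False using h False by simp
      qed
    qed simp
    ultimately show ?thesis using ineq by simp
  qed
qed



lemma XP_Sigma:
  "{kp \<in> PT s. vv s kp \<in> X} = Sigma {..<s} (RR s X)"
  unfolding PT_def RR_def vv_def by auto

lemma sum_rows:
  assumes s: "0 < s" and XT: "X \<subseteq> T s"
  shows "\<Sum>X = (\<Sum>k<s. \<Sum>p\<in>RR s X k. k*(s+1)+p)"
    and "card X = (\<Sum>k<s. card (RR s X k))"
proof -
  define XP where "XP = {kp \<in> PT s. vv s kp \<in> X}"
  have img: "X = vv s ` XP"
  proof
    show "X \<subseteq> vv s ` XP"
    proof
      fix x assume x: "x \<in> X"
      then obtain kp where "kp \<in> PT s" "x = vv s kp" using XT T_eq[OF s] by auto
      then show "x \<in> vv s ` XP" unfolding XP_def using x by auto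
    qed
    show "vv s ` XP \<subseteq> X" unfolding XP_def by auto
  qed
  have inj: "inj_on (vv s) XP" using vv_inj[of s] unfolding XP_def by (rule inj_on_subset) auto
  have fin: "finite XP" unfolding XP_def using PT_finite by simp
  have sig: "XP = Sigma {..<s} (RR s X)" unfolding XP_def by (rule XP_Sigma)
  have "\<Sum>X = (\<Sum>kp\<in>XP. vv s kp)" unfolding img by (rule sum.reindex[OF inj, unfolded comp_def])
  also have "\<dots> = (\<Sum>kp\<in>Sigma {..<s} (RR s X). vv s kp)" unfolding sig ..
  also have "\<dots> = (\<Sum>(k,p)\<in>Sigma {..<s} (RR s X). vv s (k,p))"
    by (rule sum.cong) auto
  also have "\<dots> = (\<Sum>k<s. \<Sum>p\<in>RR s X k. vv s (k,p))"
    by (rule sum.Sigma[symmetric]) (auto simp: RR_finite)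
  finally show "\<Sum>X = (\<Sum>k<s. \<Sum>p\<in>RR s X k. k*(s+1)+p)" unfolding vv_def by simp
  have "card X = card XP" unfolding img by (rule card_image[OF inj])
  also have "\<dots> = (\<Sum>k<s. card (RR s X k))" unfolding sig by (rule card_SigmaI) (auto simp: RR_finite)
  finally show "card X = (\<Sum>k<s. card (RR s X k))" .
qed

definition Phi :: "nat \<Rightarrow> (nat \<Rightarrow> nat) \<Rightarrow> int" where
  "Phi s c = (\<Sum>k<s. int (c k) * (2 * int s * (int k + 1) - int (c k))) - (\<Sum>k<s. int (c k))^2"

definition F2 :: "nat set \<Rightarrow> int" where
  "F2 X = 2 * int (\<Sum>X) - int (card X) * (int (card X) - 1)"

lemma row_term:
  assumes "k < s"
  shows "0 \<le> 2 * int (s-k) * int (card (RR s X k)) - int (card (RR s X k)) * (int (card (RR s X k)) + 1) - 2 * int (\<Sum>(RR s X k))"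
    and "2 * int (s-k) * int (card (RR s X k)) - int (card (RR s X k)) * (int (card (RR s X k)) + 1) - 2 * int (\<Sum>(RR s X k)) = 0
          \<longleftrightarrow> RR s X k = {s - k - card (RR s X k)..<s-k}"
proof -
  have sub: "RR s X k \<subseteq> {..<s-k}" using RR_sub by fastforce
  note ts = top_sum[OF RR_finite sub]
  define c where "c = card (RR s X k)"
  define S where "S = \<Sum>(RR s X k)"
  have a: "2 * S + c * (c + 1) \<le> 2 * (s-k) * c" using ts unfolding c_def S_def by simp
  have b: "2 * S + c * (c + 1) = 2 * (s-k) * c \<longleftrightarrow> RR s X k = {s - k - c..<s-k}" using ts unfolding c_def S_def by simp
  have e1: "int (2 * S + c * (c + 1)) = 2 * int S + int c * (int c + 1)" by (simp add: algebra_simps)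
  have e2: "int (2 * (s-k) * c) = 2 * int (s-k) * int c" by simp
  have ai: "2 * int S + int c * (int c + 1) \<le> 2 * int (s-k) * int c"
    using a of_nat_le_iff[where 'a=int, of "2 * S + c * (c + 1)" "2 * (s-k) * c"] unfolding e1 e2 by simp
  have bi: "(2 * int S + int c * (int c + 1) = 2 * int (s-k) * int c) \<longleftrightarrow> (2 * S + c * (c + 1) = 2 * (s-k) * c)"
    using of_nat_eq_iff[where 'a=int, of "2 * S + c * (c + 1)" "2 * (s-k) * c"] unfolding e1 e2 by simp
  show "0 \<le> 2 * int (s-k) * int (card (RR s X k)) - int (card (RR s X k)) * (int (card (RR s X k)) + 1) - 2 * int (\<Sum>(RR s X k))"
    using ai unfolding c_def S_def by linarith
  show "2 * int (s-k) * int (card (RR s X k)) - int (card (RR s X k)) * (int (card (RR s X k)) + 1) - 2 * int (\<Sum>(RR s X k)) = 0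
          \<longleftrightarrow> RR s X k = {s - k - card (RR s X k)..<s-k}"
    using bi b unfolding c_def S_def by linarith
qed

lemma F2_bound:
  assumes s: "0 < s" and XT: "X \<subseteq> T s"
  shows "F2 X \<le> Phi s (\<lambda>k. card (RR s X k))"
    and "F2 X = Phi s (\<lambda>k. card (RR s X k)) \<longleftrightarrow> (\<forall>k<s. RR s X k = {s - k - card (RR s X k)..<s-k})"
proof -
  define c where "c k = card (RR s X k)" for k
  define D where "D k = 2 * int (s-k) * int (c k) - int (c k) * (int (c k) + 1) - 2 * int (\<Sum>(RR s X k))" for k
  have D0: "\<And>k. k \<in> {..<s} \<Longrightarrow> 0 \<le> D k" unfolding D_def c_def using row_term(1) by auto
  have Deq: "\<And>k. k < s \<Longrightarrow> D k = 0 \<longleftrightarrow> RR s X k = {s - k - c k..<s-k}" unfolding D_def c_def using row_term(2) by auto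
  have sX: "int (\<Sum>X) = (\<Sum>k<s. int (k*(s+1)) * int (c k) + int (\<Sum>(RR s X k)))"
  proof -
    have "\<Sum>X = (\<Sum>k<s. \<Sum>p\<in>RR s X k. k*(s+1)+p)" by (rule sum_rows(1)[OF s XT])
    also have "\<dots> = (\<Sum>k<s. k*(s+1) * c k + \<Sum>(RR s X k))"
      unfolding c_def by (simp add: sum.distrib mult.commute)
    finally show ?thesis by simp
  qed
  have cX: "int (card X) = (\<Sum>k<s. int (c k))" using sum_rows(2)[OF s XT] unfolding c_def by simp
  have key: "Phi s c - F2 X = (\<Sum>k<s. D k)"
  proof -
    have "Phi s c - F2 X = (\<Sum>k<s. int (c k) * (2 * int s * (int k + 1) - int (c k))) - 2 * int (\<Sum>X) - (\<Sum>k<s. int (c k))"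
      unfolding Phi_def F2_def cX by (simp add: algebra_simps power2_eq_square)
    also have "\<dots> = (\<Sum>k<s. int (c k) * (2 * int s * (int k + 1) - int (c k)) - 2 * (int (k*(s+1)) * int (c k) + int (\<Sum>(RR s X k))) - int (c k))"
      unfolding sX by (simp add: sum_subtractf sum_distrib_left)
    also have "\<dots> = (\<Sum>k<s. D k)"
    proof (rule sum.cong)
      fix k assume "k \<in> {..<s}"
      then have "int (s - k) = int s - int k" by simp
      then show "int (c k) * (2 * int s * (int k + 1) - int (c k)) - 2 * (int (k*(s+1)) * int (c k) + int (\<Sum>(RR s X k))) - int (c k) = D k"
        unfolding D_def by (simp add: algebra_simps)
    qed simp
    finally show ?thesis .
  qed
  have "0 \<le> (\<Sum>k<s. D k)" using D0 by (rule sum_nonneg)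
  then show "F2 X \<le> Phi s (\<lambda>k. card (RR s X k))" using key unfolding c_def by simp
  have "(\<Sum>k<s. D k) = 0 \<longleftrightarrow> (\<forall>k\<in>{..<s}. D k = 0)" using D0 by (intro sum_nonneg_eq_0_iff) auto
  then show "F2 X = Phi s (\<lambda>k. card (RR s X k)) \<longleftrightarrow> (\<forall>k<s. RR s X k = {s - k - card (RR s X k)..<s-k})"
    using key Deq unfolding c_def by auto
qed



lemma cheb_int:
  fixes a b :: "nat \<Rightarrow> int"
  assumes "\<And>i j. i \<le> j \<Longrightarrow> j < n \<Longrightarrow> a i \<le> a j"
  assumes "\<And>i j. i \<le> j \<Longrightarrow> j < n \<Longrightarrow> b j \<le> b i"
  shows "int n * (\<Sum>k<n. a k * b k) \<le> (\<Sum>k<n. a k) * (\<Sum>k<n. b k)"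
proof -
  let ?S = "(\<Sum>j<n. (\<Sum>k<n. (a j - a k) * (b j - b k)))"
  have "2 * (int n * (\<Sum>j<n. (a j * b j)) - (\<Sum>j<n. b j) * (\<Sum>k<n. a k)) = ?S"
    by (simp only: one_add_one[symmetric] algebra_simps)
      (simp add: algebra_simps sum_subtractf sum.distrib sum.swap[of "\<lambda>i j. a i * b j"] sum_distrib_left)
  also
  { fix i j::nat assume "i<n" "j<n"
    hence "a i - a j \<le> 0 \<and> b i - b j \<ge> 0 \<or> a i - a j \<ge> 0 \<and> b i - b j \<le> 0"
      using assms by (cases "i \<le> j") (auto simp: algebra_simps)
  } then have "?S \<le> 0"
    by (auto intro!: sum_nonpos simp: mult_le_0_iff)
  finally show ?thesis by (simp add: algebra_simps)
qed

lemma S1: "2 * (\<Sum>k<K. int k) = int K * (int K - 1)"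
  by (induction K) (auto simp: algebra_simps)

lemma S2: "6 * (\<Sum>k<K. (int k)^2) = int K * (int K - 1) * (2 * int K - 1)"
  by (induction K) (auto simp: algebra_simps power2_eq_square)

lemma B0: "(\<Sum>k<K. 2 * int K - 1 - 2 * int k) = (int K)^2"
proof -
  have "(\<Sum>k<K. 2 * int K - 1 - 2 * int k) = int K * (2 * int K - 1) - 2 * (\<Sum>k<K. int k)"
    by (simp add: sum_subtractf sum_distrib_left)
  then show ?thesis using S1[of K] by (simp add: algebra_simps power2_eq_square)
qed

lemma B1: "6 * (\<Sum>k<K. (2 * int K - 1 - 2 * int k) * (int k + 1)) = int K * (int K + 1) * (2 * int K + 1)"
proof -
  have "(\<Sum>k<K. (2 * int K - 1 - 2 * int k) * (int k + 1)) = (\<Sum>k<K. (2 * int K - 1) + (2 * int K - 3) * int k - 2 * (int k)^2)"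
    by (rule sum.cong) (simp_all add: algebra_simps power2_eq_square)
  also have "\<dots> = int K * (2 * int K - 1) + (2 * int K - 3) * (\<Sum>k<K. int k) - 2 * (\<Sum>k<K. (int k)^2)"
    by (simp add: sum.distrib sum_subtractf sum_distrib_left)
  finally have e: "(\<Sum>k<K. (2 * int K - 1 - 2 * int k) * (int k + 1)) = int K * (2 * int K - 1) + (2 * int K - 3) * (\<Sum>k<K. int k) - 2 * (\<Sum>k<K. (int k)^2)" .
  show ?thesis unfolding e using S1[of K] S2[of K] by algebra
qed

lemma B2: "3 * (\<Sum>k<K. (2 * int K - 1 - 2 * int k)^2) = int K * (4 * (int K)^2 - 1)"
proof -
  have "(\<Sum>k<K. (2 * int K - 1 - 2 * int k)^2) = (\<Sum>k<K. (2 * int K - 1)^2 - 4 * (2 * int K - 1) * int k + 4 * (int k)^2)"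
    by (rule sum.cong) (simp_all add: algebra_simps power2_eq_square)
  also have "\<dots> = int K * (2 * int K - 1)^2 - 4 * (2 * int K - 1) * (\<Sum>k<K. int k) + 4 * (\<Sum>k<K. (int k)^2)"
    by (simp add: sum.distrib sum_subtractf sum_distrib_left)
  finally have e: "(\<Sum>k<K. (2 * int K - 1 - 2 * int k)^2) = int K * (2 * int K - 1)^2 - 4 * (2 * int K - 1) * (\<Sum>k<K. int k) + 4 * (\<Sum>k<K. (int k)^2)" .
  show ?thesis unfolding e using S1[of K] S2[of K] by algebra
qed

lemma W1: "2 * (\<Sum>k<j. int k + 1) = int j * (int j + 1)"
  by (induction j) (auto simp: algebra_simps)

lemma Wsum: "2 * (\<Sum>k<j. (int s + 2) * (int k + 1) - (int K + 1)^2) = (int s + 2) * int j * (int j + 1) - 2 * int j * (int K + 1)^2"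
proof -
  have "(\<Sum>k<j. (int s + 2) * (int k + 1) - (int K + 1)^2) = (int s + 2) * (\<Sum>k<j. int k + 1) - int j * (int K + 1)^2"
    by (simp add: sum_subtractf sum_distrib_left)
  then show ?thesis using W1[of j] by algebra
qed

definition Q :: "nat \<Rightarrow> nat \<Rightarrow> (nat \<Rightarrow> int) \<Rightarrow> int" where
  "Q s K r = (\<Sum>k<K. r k * (2 * int s * (int k + 1) - r k)) - (\<Sum>k<K. r k)^2"

definition bb :: "nat \<Rightarrow> nat \<Rightarrow> int" where
  "bb K k = 2 * int K - 1 - 2 * int k"

definition ww :: "nat \<Rightarrow> nat \<Rightarrow> nat \<Rightarrow> int" where
  "ww s K k = (int s + 2) * (int k + 1) - (int K + 1)^2"

lemma Q_expand:
  "Q s K (\<lambda>k. bb K k + e k) = Q s K (bb K) + 2 * (\<Sum>k<K. ww s K k * e k) - (\<Sum>k<K. (e k)^2) - (\<Sum>k<K. e k)^2"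
proof -
  have sb: "(\<Sum>k<K. bb K k) = (int K)^2" unfolding bb_def by (rule B0)
  have "(\<Sum>k<K. (bb K k + e k) * (2 * int s * (int k + 1) - (bb K k + e k)))
     = (\<Sum>k<K. bb K k * (2 * int s * (int k + 1) - bb K k) + e k * (2 * int s * (int k + 1) - 2 * bb K k) - (e k)^2)"
    by (rule sum.cong) (simp_all add: algebra_simps power2_eq_square)
  also have "\<dots> = (\<Sum>k<K. bb K k * (2 * int s * (int k + 1) - bb K k)) + (\<Sum>k<K. e k * (2 * int s * (int k + 1) - 2 * bb K k)) - (\<Sum>k<K. (e k)^2)"
    by (simp add: sum.distrib sum_subtractf)
  finally have e1: "(\<Sum>k<K. (bb K k + e k) * (2 * int s * (int k + 1) - (bb K k + e k))) =
      (\<Sum>k<K. bb K k * (2 * int s * (int k + 1) - bb K k)) + (\<Sum>k<K. e k * (2 * int s * (int k + 1) - 2 * bb K k)) - (\<Sum>k<K. (e k)^2)" .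
  have e2: "(\<Sum>k<K. e k * (2 * int s * (int k + 1) - 2 * bb K k)) = 2 * (\<Sum>k<K. ww s K k * e k) + 2 * (int K)^2 * (\<Sum>k<K. e k)"
  proof -
    have "(\<Sum>k<K. e k * (2 * int s * (int k + 1) - 2 * bb K k)) = (\<Sum>k<K. 2 * (ww s K k * e k) + 2 * (int K)^2 * e k)"
      by (rule sum.cong) (simp_all add: ww_def bb_def algebra_simps power2_eq_square)
    then show ?thesis by (simp add: sum.distrib sum_distrib_left)
  qed
  have e3: "(\<Sum>k<K. bb K k + e k) = (int K)^2 + (\<Sum>k<K. e k)" using sb by (simp add: sum.distrib)
  show ?thesis unfolding Q_def e1 e2 e3 sb by (simp add: algebra_simps power2_eq_square)
qed

lemma Q_bb: "12 * Q s K (bb K) + 3 * int K * (int K + 1) * (int s - 2 * int K)^2 = int K * (int K + 1) * (3 * (int s)^2 - 4 * (int s + 1) * (int K - 1))"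
proof -
  have "Q s K (bb K) = 2 * int s * (\<Sum>k<K. bb K k * (int k + 1)) - (\<Sum>k<K. (bb K k)^2) - (\<Sum>k<K. bb K k)^2"
  proof -
    have "(\<Sum>k<K. bb K k * (2 * int s * (int k + 1) - bb K k)) = (\<Sum>k<K. 2 * int s * (bb K k * (int k + 1)) - (bb K k)^2)"
      by (rule sum.cong) (simp_all add: algebra_simps power2_eq_square)
    then show ?thesis unfolding Q_def by (simp add: sum_subtractf sum_distrib_left)
  qed
  then show ?thesis using B0[of K] B1[of K] B2[of K] unfolding bb_def by algebra
qed

lemma Wtot: "2 * (\<Sum>k<K. ww s K k) = int K * (int K + 1) * (int s - 2 * int K)"
  unfolding ww_def using Wsum[where j=K and s=s and K=K] by algebra


lemma Q_cong: "(\<And>k. k < K \<Longrightarrow> r k = r' k) \<Longrightarrow> Q s K r = Q s K r'"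
  unfolding Q_def by (metis (no_types, lifting) lessThan_iff sum.cong)

lemma Phi_Q:
  assumes "K \<le> s" "\<And>k. K \<le> k \<Longrightarrow> c k = 0"
  shows "Phi s c = Q s K (\<lambda>k. int (c k))"
proof -
  have a: "(\<Sum>k<s. int (c k) * (2 * int s * (int k + 1) - int (c k))) = (\<Sum>k<K. int (c k) * (2 * int s * (int k + 1) - int (c k)))"
    by (rule sum.mono_neutral_right) (use assms in auto)
  have b: "(\<Sum>k<s. int (c k)) = (\<Sum>k<K. int (c k))"
    by (rule sum.mono_neutral_right) (use assms in auto)
  show ?thesis unfolding Phi_def Q_def a b ..
qed

definition gg :: "nat \<Rightarrow> nat \<Rightarrow> int" where
  "gg s K = int K * (int K + 1) * (3 * (int s)^2 - 4 * (int s + 1) * (int K - 1))"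

lemma gg_step: "gg s (Suc K) - gg s K = 6 * (int K + 1) * ((int s)^2 - 2 * (int s + 1) * int K)"
  unfolding gg_def by (simp add: algebra_simps power2_eq_square)

lemma gg_mono: "2 * (K + d) \<le> s \<Longrightarrow> gg s K \<le> gg s (K + d)"
proof (induction d)
  case 0 then show ?case by simp
next
  case (Suc d)
  then have IH: "gg s K \<le> gg s (K + d)" by simp
  have le: "2 * (int K + int d) + 2 \<le> int s" using Suc.prems by simp
  have h: "(int s + 1) * (2 * (int K + int d)) \<le> (int s + 1) * (int s - 2)"
    by (rule mult_left_mono) (use le in simp_all)
  have "2 * (int s + 1) * (int K + int d) \<le> (int s + 1) * (int s - 2)"
    using h by (simp add: algebra_simps)
  then have "0 \<le> (int s)^2 - 2 * (int s + 1) * (int K + int d)" by (simp add: algebra_simps power2_eq_square)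
  then have "0 \<le> 6 * (int (K+d) + 1) * ((int s)^2 - 2 * (int s + 1) * int (K+d))" by simp
  then show ?case using IH gg_step[of s "K+d"] by simp
qed

lemma Q_nT:
  assumes A: "A = s div 2"
  shows "Q s A (\<lambda>k. int (s - 1 - 2*k)) = Q s A (bb A)"
proof -
  define M where "M = int s - 2 * int A"
  have "Q s A (\<lambda>k. int (s - 1 - 2*k)) = Q s A (\<lambda>k. bb A k + (\<lambda>_. M) k)"
  proof (rule Q_cong)
    fix k assume "k < A"
    then have "2*k + 1 \<le> s" using A by linarith
    then show "int (s - 1 - 2*k) = bb A k + M" unfolding bb_def M_def by simp
  qed
  also have "\<dots> = Q s A (bb A) + 2 * (\<Sum>k<A. ww s A k * M) - (\<Sum>k<A. M^2) - (\<Sum>k<A. M)^2"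
    by (rule Q_expand)
  also have "2 * (\<Sum>k<A. ww s A k * M) = M * (2 * (\<Sum>k<A. ww s A k))"
    by (simp add: sum_distrib_left mult.commute mult.left_commute)
  also have "\<dots> = M * (int A * (int A + 1) * M)" unfolding Wtot M_def ..
  finally show ?thesis by (simp add: algebra_simps power2_eq_square)
qed

lemma Q_nT_val:
  assumes A: "A = s div 2"
  shows "12 * Q s A (\<lambda>k. int (s - 1 - 2*k)) = gg s A - 3 * int A * (int A + 1) * (int s - 2 * int A)^2"
  using Q_bb[of s A] Q_nT[OF A] unfolding gg_def by simp



lemma Q_zero: "Q s 0 r = 0" unfolding Q_def by simp

lemma ww_mono: "i \<le> j \<Longrightarrow> ww s K i \<le> ww s K j"
  unfolding ww_def by (simp add: mult_left_mono)

lemma seq_K_lt: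
  assumes A: "A = s div 2" and KA: "K < A"
    and mono: "\<And>i j. i \<le> j \<Longrightarrow> j < K \<Longrightarrow> e j \<le> e i"
    and epos: "\<And>k. k < K \<Longrightarrow> 0 \<le> e k"
    and ele: "\<And>k. k < K \<Longrightarrow> e k \<le> int s - 2 * int K"
  shows "Q s K (\<lambda>k. bb K k + e k) < Q s A (\<lambda>k. int (s - 1 - 2*k))"
proof -
  define M where "M = int s - 2 * int K"
  define P where "P = (\<Sum>k<K. ww s K k * e k)"
  define V where "V = (\<Sum>k<K. (e k)^2)"
  define S where "S = (\<Sum>k<K. e k)"
  define Qc where "Qc = Q s K (\<lambda>k. bb K k + e k)"
  define Qb where "Qb = Q s K (bb K)"
  have QC: "Qc = Qb + 2 * P - V - S^2" unfolding Qc_def Qb_def P_def V_def S_def by (rule Q_expand)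
  have ch: "int K * P \<le> (\<Sum>k<K. ww s K k) * S"
    unfolding P_def S_def by (rule cheb_int) (use mono ww_mono in auto)
  have cs0: "int K * (\<Sum>k<K. (- e k) * e k) \<le> (\<Sum>k<K. - e k) * (\<Sum>k<K. e k)"
    by (rule cheb_int) (use mono in auto)
  have cs: "S^2 \<le> int K * V"
  proof -
    have "(\<Sum>k<K. (- e k) * e k) = - V" unfolding V_def by (simp add: sum_negf power2_eq_square)
    moreover have "(\<Sum>k<K. - e k) = - S" unfolding S_def by (simp add: sum_negf)
    ultimately show ?thesis using cs0 unfolding S_def by (simp add: power2_eq_square)
  qed
  have h1: "2 * (int K * P) \<le> int K * (int K + 1) * M * S"
  proof -
    have "2 * (int K * P) \<le> 2 * ((\<Sum>k<K. ww s K k) * S)" using ch by simp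
    also have "2 * ((\<Sum>k<K. ww s K k) * S) = (2 * (\<Sum>k<K. ww s K k)) * S" by simp
    also have "\<dots> = int K * (int K + 1) * M * S" unfolding Wtot M_def ..
    finally show ?thesis .
  qed
  have sq: "4 * S * (int K * M - S) \<le> (int K * M)^2"
  proof -
    have "0 \<le> (int K * M - 2 * S)^2" by simp
    then show ?thesis by (simp add: algebra_simps power2_eq_square)
  qed
  have key: "4 * (Qc - Qb) \<le> int K * (int K + 1) * M^2"
  proof (cases "K = 0")
    case True then show ?thesis unfolding Qc_def Qb_def by (simp add: Q_zero)
  next
    case False
    have "int K * (4 * (Qc - Qb)) = 4 * (2 * (int K * P)) - 4 * (int K * V) - 4 * int K * S^2"
      unfolding QC by (simp add: algebra_simps)
    also have "\<dots> \<le> 4 * (int K * (int K + 1) * M * S) - 4 * S^2 - 4 * int K * S^2"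
      using h1 cs by linarith
    also have "\<dots> = (int K + 1) * (4 * S * (int K * M - S))" by (simp add: algebra_simps power2_eq_square)
    also have "\<dots> \<le> (int K + 1) * (int K * M)^2" using sq by (rule mult_left_mono) simp
    also have "\<dots> = int K * (int K * (int K + 1) * M^2)" by (simp add: algebra_simps power2_eq_square)
    finally show ?thesis using False by simp
  qed
  have QB: "12 * Qb + 3 * int K * (int K + 1) * M^2 = gg s K" unfolding Qb_def M_def gg_def by (rule Q_bb)
  have c12: "12 * Qc \<le> gg s K"
  proof -
    have "12 * Qc - gg s K = 12 * Qc - (12 * Qb + 3 * int K * (int K + 1) * M^2)" using QB by simp
    also have "\<dots> = 3 * (4 * (Qc - Qb) - int K * (int K + 1) * M^2)" by (simp add: algebra_simps)
    finally have "12 * Qc - gg s K = 3 * (4 * (Qc - Qb) - int K * (int K + 1) * M^2)" .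
    moreover define Z where "Z = int K * (int K + 1) * M^2"
    ultimately have "12 * Qc - gg s K = 12 * Qc - 12 * Qb - 3 * Z" by simp
    moreover have "4 * Qc - 4 * Qb \<le> Z" using key unfolding Z_def by simp
    ultimately show ?thesis by linarith
  qed
  have A1: "1 \<le> A" using KA by simp
  have gmono: "gg s K \<le> gg s (A - 1)"
    using gg_mono[of K "A - 1 - K" s] KA A by simp
  have gstep: "gg s A - gg s (A-1) = 6 * int A * ((int s)^2 - 2 * (int s + 1) * (int A - 1))"
    using gg_step[of s "A-1"] A1 by (simp add: of_nat_diff)
  define MA where "MA = int s - 2 * int A"
  have MA: "0 \<le> MA" "MA \<le> 1" unfolding MA_def A by linarith+
  have MA2: "MA^2 \<le> 1" using MA by (simp add: power2_eq_square mult_le_one)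
  have t1: "3 * int A * (int A + 1) * MA^2 \<le> 3 * int A * (int A + 1)"
    using MA2 by (simp add: mult_left_mono)
  have t2: "int s + 2 \<le> (int s)^2 - 2 * (int s + 1) * (int A - 1)"
  proof -
    have "2 * int A \<le> int s" using MA unfolding MA_def by simp
    then have "(int s + 1) * (2 * int A - 2) \<le> (int s + 1) * (int s - 2)" by (intro mult_left_mono) simp_all
    then show ?thesis by (simp add: algebra_simps power2_eq_square)
  qed
  have t3: "6 * int A * (int s + 2) \<le> 6 * int A * ((int s)^2 - 2 * (int s + 1) * (int A - 1))"
    using t2 by (simp add: mult_left_mono)
  have t4: "3 * int A * (int A + 1) < 6 * int A * (int s + 2)"
  proof -
    have "int A + 1 < 2 * (int s + 2)" using MA unfolding MA_def by simp
    then have "(3 * int A) * (int A + 1) < (3 * int A) * (2 * (int s + 2))" using A1 by (intro mult_strict_left_mono) simp_all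
    then show ?thesis by (simp add: algebra_simps)
  qed
  have QN: "12 * Q s A (\<lambda>k. int (s - 1 - 2*k)) = gg s A - 3 * int A * (int A + 1) * MA^2"
    unfolding MA_def by (rule Q_nT_val[OF A])
  have "12 * Qc < 12 * Q s A (\<lambda>k. int (s - 1 - 2*k))"
    using c12 gmono gstep t1 t3 t4 QN by linarith
  then show ?thesis unfolding Qc_def by simp
qed


lemma seq_odd:
  assumes A: "A = s div 2" and od: "odd s"
    and mono: "\<And>i j. i \<le> j \<Longrightarrow> j < A \<Longrightarrow> e j \<le> e i"
    and epos: "\<And>k. k < A \<Longrightarrow> 0 \<le> e k"
    and ele: "\<And>k. k < A \<Longrightarrow> e k \<le> 1"
  shows "Q s A (\<lambda>k. bb A k + e k) \<le> Q s A (\<lambda>k. int (s - 1 - 2*k))"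
    and "Q s A (\<lambda>k. bb A k + e k) = Q s A (\<lambda>k. int (s - 1 - 2*k)) \<Longrightarrow> (\<forall>k<A. e k = 1) \<or> (\<forall>k<A. e k = 0)"
proof -
  have sA: "int s = 2 * int A + 1" using A od by (auto elim!: oddE)
  have e01: "\<And>k. k < A \<Longrightarrow> e k = 0 \<or> e k = 1" using epos ele by force
  define J where "J = {k. k < A \<and> e k = 1}"
  have Jd: "J = {..<card J}"
  proof (rule downclosed_eq)
    show "finite J" unfolding J_def by simp
    fix m m' assume "m \<in> J" "m' \<le> m"
    then have mA: "m < A" "e m = 1" "m' \<le> m" unfolding J_def by auto
    then have "m' < A" "e m \<le> e m'" "e m = 1" using mono[of m' m] by auto
    then show "m' \<in> J" unfolding J_def using ele by force
  qed
  define j where "j = card J"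
  have jA: "j \<le> A" unfolding j_def J_def by (rule order.trans[OF card_mono[of "{..<A}"]]) auto
  have ek: "\<And>k. k < A \<Longrightarrow> e k = (if k < j then 1 else 0)"
  proof -
    fix k assume k: "k < A"
    have "k \<in> J \<longleftrightarrow> k < j" using Jd j_def by auto
    then show "e k = (if k < j then 1 else 0)" using e01[OF k] k unfolding J_def by auto
  qed
  have P: "(\<Sum>k<A. ww s A k * e k) = (\<Sum>k<j. ww s A k)"
    by (rule sum.mono_neutral_cong_right) (use jA ek in auto)
  have V: "(\<Sum>k<A. (e k)^2) = int j"
  proof -
    have "(\<Sum>k<A. (e k)^2) = (\<Sum>k<j. (1::int))"
      by (rule sum.mono_neutral_cong_right) (use jA ek in auto)
    then show ?thesis by simp
  qed
  have S: "(\<Sum>k<A. e k) = int j"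
  proof -
    have "(\<Sum>k<A. e k) = (\<Sum>k<j. (1::int))"
      by (rule sum.mono_neutral_cong_right) (use jA ek in auto)
    then show ?thesis by simp
  qed
  have W: "2 * (\<Sum>k<j. ww s A k) = (int s + 2) * int j * (int j + 1) - 2 * int j * (int A + 1)^2"
    unfolding ww_def by (rule Wsum)
  have QC: "Q s A (\<lambda>k. bb A k + e k) = Q s A (bb A) + 2 * (\<Sum>k<A. ww s A k * e k) - (\<Sum>k<A. (e k)^2) - (\<Sum>k<A. e k)^2"
    by (rule Q_expand)
  have QN: "Q s A (\<lambda>k. int (s - 1 - 2*k)) = Q s A (bb A)" by (rule Q_nT[OF A])
  have D: "Q s A (\<lambda>k. bb A k + e k) - Q s A (\<lambda>k. int (s - 1 - 2*k)) = 2 * int j * (int A + 1) * (int j - int A)"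
  proof -
    have "Q s A (\<lambda>k. bb A k + e k) - Q s A (\<lambda>k. int (s - 1 - 2*k)) = 2 * (\<Sum>k<j. ww s A k) - int j - (int j)^2"
      unfolding QC QN P V S by simp
    also have "\<dots> = (int s + 2) * int j * (int j + 1) - 2 * int j * (int A + 1)^2 - int j - (int j)^2"
      unfolding W ..
    also have "\<dots> = 2 * int j * (int A + 1) * (int j - int A)"
      unfolding sA by (simp add: algebra_simps power2_eq_square)
    finally show ?thesis .
  qed
  have "2 * int j * (int A + 1) * (int j - int A) \<le> 0"
    using jA by (simp add: mult_nonneg_nonpos)
  then show "Q s A (\<lambda>k. bb A k + e k) \<le> Q s A (\<lambda>k. int (s - 1 - 2*k))" using D by linarith
  assume eq: "Q s A (\<lambda>k. bb A k + e k) = Q s A (\<lambda>k. int (s - 1 - 2*k))"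
  then have "2 * int j * (int A + 1) * (int j - int A) = 0" using D by simp
  then have "j = 0 \<or> j = A" by simp
  then show "(\<forall>k<A. e k = 1) \<or> (\<forall>k<A. e k = 0)" using ek by auto
qed


lemma seq_main:
  assumes s3: "3 \<le> s"
    and H1: "\<And>k. c k \<le> s - 1 - 2*k"
    and H2: "\<And>k. 0 < c (Suc k) \<Longrightarrow> c (Suc k) + 2 \<le> c k"
  shows "Phi s c \<le> Phi s (\<lambda>k. s - 1 - 2*k)"
    and "Phi s c = Phi s (\<lambda>k. s - 1 - 2*k) \<Longrightarrow> (\<forall>k. c k = s - 1 - 2*k) \<or> (odd s \<and> (\<forall>k. c k = s - 1 - 2*k - 1))"
proof -
  define A where "A = s div 2"
  have A1: "1 \<le> A" using s3 A_def by simp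
  have sA: "s \<le> 2 * A + 1" "2 * A \<le> s" unfolding A_def by presburger+
  have nTz: "\<And>k. A \<le> k \<Longrightarrow> s - 1 - 2*k = 0" using sA by simp
  have cA: "c A = 0" using H1[of A] nTz[of A] by simp
  have zprop: "\<And>k d. c k = 0 \<Longrightarrow> c (k + d) = 0"
  proof -
    fix k d assume "c k = 0"
    then show "c (k + d) = 0"
    proof (induction d)
      case 0 then show ?case by simp
    next
      case (Suc d)
      then have "c (k + d) = 0" by simp
      then show ?case using H2[of "k+d"] by (cases "c (Suc (k+d)) = 0") auto
    qed
  qed
  define K where "K = (LEAST k. c k = 0)"
  have cK: "c K = 0" unfolding K_def by (rule LeastI[of _ A]) (rule cA)
  have KA: "K \<le> A" unfolding K_def by (rule Least_le) (rule cA)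
  have pos: "\<And>k. k < K \<Longrightarrow> 0 < c k" unfolding K_def using not_less_Least by blast
  have zK: "\<And>k. K \<le> k \<Longrightarrow> c k = 0"
  proof -
    fix k assume "K \<le> k"
    then have "K + (k - K) = k" by simp
    then show "c k = 0" using zprop[OF cK, of "k - K"] by simp
  qed
  have PhiC: "Phi s c = Q s K (\<lambda>k. int (c k))" by (rule Phi_Q) (use KA sA zK in auto)
  have PhiN: "Phi s (\<lambda>k. s - 1 - 2*k) = Q s A (\<lambda>k. int (s - 1 - 2*k))" by (rule Phi_Q) (use sA nTz in auto)
  define e where "e k = int (c k) - bb K k" for k
  have ce: "(\<lambda>k. int (c k)) = (\<lambda>k. bb K k + e k)" by (auto simp: e_def)
  have mono1: "\<And>k. Suc k < K \<Longrightarrow> e (Suc k) \<le> e k"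
  proof -
    fix k assume "Suc k < K"
    then have "c (Suc k) + 2 \<le> c k" using H2 pos by blast
    then show "e (Suc k) \<le> e k" unfolding e_def bb_def by simp
  qed
  have mono: "\<And>i j. i \<le> j \<Longrightarrow> j < K \<Longrightarrow> e j \<le> e i"
  proof -
    fix i j :: nat assume ij: "i \<le> j" "j < K"
    then show "e j \<le> e i"
    proof (induction j)
      case 0 then show ?case by simp
    next
      case (Suc j)
      show ?case
      proof (cases "i = Suc j")
        case True then show ?thesis by simp
      next
        case False
        then have "i \<le> j" "j < K" using Suc.prems by auto
        then have "e j \<le> e i" using Suc.IH by simp
        moreover have "e (Suc j) \<le> e j" using mono1 Suc.prems by simp
        ultimately show ?thesis by simp
      qed
    qed
  qed
  have epos: "\<And>k. k < K \<Longrightarrow> 0 \<le> e k"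
  proof -
    fix k assume k: "k < K"
    have "0 < c (K - 1)" using pos k by simp
    then have "0 \<le> e (K - 1)" unfolding e_def bb_def using k by (simp add: of_nat_diff)
    moreover have "e (K - 1) \<le> e k" using mono[of k "K - 1"] k by simp
    ultimately show "0 \<le> e k" by simp
  qed
  have ele: "\<And>k. k < K \<Longrightarrow> e k \<le> int s - 2 * int K"
  proof -
    fix k assume k: "k < K"
    have "0 < c k" using pos k by simp
    then have "c k + 2*k + 1 \<le> s" using H1[of k] by simp
    then show "e k \<le> int s - 2 * int K" unfolding e_def bb_def by simp
  qed
  have QCe: "Q s K (\<lambda>k. int (c k)) = Q s K (\<lambda>k. bb K k + e k)" unfolding ce ..
  have main: "Phi s c \<le> Phi s (\<lambda>k. s - 1 - 2*k) \<and>
      (Phi s c = Phi s (\<lambda>k. s - 1 - 2*k) \<longrightarrow> (\<forall>k. c k = s - 1 - 2*k) \<or> (odd s \<and> (\<forall>k. c k = s - 1 - 2*k - 1)))"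
  proof (cases "K < A")
    case True
    have "Q s K (\<lambda>k. bb K k + e k) < Q s A (\<lambda>k. int (s - 1 - 2*k))"
      by (rule seq_K_lt[OF A_def True mono epos ele])
    then show ?thesis unfolding PhiC PhiN QCe by simp
  next
    case False
    then have KA': "K = A" using KA by simp
    show ?thesis
    proof (cases "even s")
      case True
      then have s2: "s = 2 * A" unfolding A_def by simp
      have z: "int s - 2 * int K = 0" using s2 KA' by simp
      have e0: "\<And>k. k < A \<Longrightarrow> e k = 0"
      proof -
        fix k assume "k < A"
        then have "0 \<le> e k" "e k \<le> 0" using epos[of k] ele[of k] z KA' by auto
        then show "e k = 0" by simp
      qed
      have call: "\<And>k. c k = s - 1 - 2*k"
      proof -
        fix k show "c k = s - 1 - 2*k"
        proof (cases "k < A")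
          case True
          then have "e k = 0" using e0 by simp
          then have "int (c k) = bb K k" using e_def[of k] by linarith
          then show ?thesis unfolding bb_def KA' s2 using True by simp
        next
          case False then show ?thesis using zK KA' nTz by simp
        qed
      qed
      then have "c = (\<lambda>k. s - 1 - 2*k)" by auto
      then show ?thesis by simp
    next
      case False
      then have od: "odd s" by simp
      have s2: "s = 2 * A + 1" unfolding A_def using od by simp
      have ele1: "\<And>k. k < A \<Longrightarrow> e k \<le> 1" using ele KA' s2 by simp
      have mono': "\<And>i j. i \<le> j \<Longrightarrow> j < A \<Longrightarrow> e j \<le> e i" using mono KA' by simp
      have epos': "\<And>k. k < A \<Longrightarrow> 0 \<le> e k" using epos KA' by simp
      note so = seq_odd[OF A_def od mono' epos' ele1]
      have QQ: "Q s K (\<lambda>k. int (c k)) = Q s A (\<lambda>k. bb A k + e k)" using QCe KA' by simp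
      have le: "Phi s c \<le> Phi s (\<lambda>k. s - 1 - 2*k)" unfolding PhiC PhiN QQ by (rule so(1))
      have eqc: "Phi s c = Phi s (\<lambda>k. s - 1 - 2*k) \<Longrightarrow> (\<forall>k. c k = s - 1 - 2*k) \<or> (\<forall>k. c k = s - 1 - 2*k - 1)"
      proof -
        assume "Phi s c = Phi s (\<lambda>k. s - 1 - 2*k)"
        then have "(\<forall>k<A. e k = 1) \<or> (\<forall>k<A. e k = 0)" using so(2) unfolding PhiC PhiN QQ by simp
        then show ?thesis
        proof
          assume h: "\<forall>k<A. e k = 1"
          have "\<And>k. c k = s - 1 - 2*k"
          proof -
            fix k show "c k = s - 1 - 2*k"
            proof (cases "k < A")
              case True
              then have "e k = 1" using h by simp
              then have "int (c k) = bb K k + 1" using e_def[of k] by linarith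
              then show ?thesis unfolding bb_def KA' s2 using True by simp
            next
              case False then show ?thesis using zK KA' nTz by simp
            qed
          qed
          then show ?thesis by simp
        next
          assume h: "\<forall>k<A. e k = 0"
          have "\<And>k. c k = s - 1 - 2*k - 1"
          proof -
            fix k show "c k = s - 1 - 2*k - 1"
            proof (cases "k < A")
              case True
              then have "e k = 0" using h by simp
              then have "int (c k) = bb K k" using e_def[of k] by linarith
              then show ?thesis unfolding bb_def KA' s2 using True by simp
            next
              case False then show ?thesis using zK KA' nTz by simp
            qed
          qed
          then show ?thesis by simp
        qed
      qed
      show ?thesis using le eqc od by blast
    qed
  qed
  then show "Phi s c \<le> Phi s (\<lambda>k. s - 1 - 2*k)"
    and "Phi s c = Phi s (\<lambda>k. s - 1 - 2*k) \<Longrightarrow> (\<forall>k. c k = s - 1 - 2*k) \<or> (odd s \<and> (\<forall>k. c k = s - 1 - 2*k - 1))"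
    by blast+
qed



definition repr3 :: "nat \<Rightarrow> nat \<Rightarrow> bool" where
  "repr3 s n \<longleftrightarrow> (\<exists>k1 k2 k3. n = k1*s + k2*(s+1) + k3*(s+2))"

lemma T_repr: "n \<in> T s \<longleftrightarrow> 0 < n \<and> \<not> repr3 s n"
  unfolding T_def repr3_def by auto

lemma repr3_not_in:
  assumes cl: "closed3 s X" and pos: "\<And>x. x \<in> X \<Longrightarrow> 0 < x"
  shows "x = k1*s + k2*(s+1) + k3*(s+2) \<Longrightarrow> x \<notin> X"
proof (induction "k1+k2+k3" arbitrary: x k1 k2 k3)
  case 0 then show ?case using pos by auto
next
  case (Suc n)
  show ?case
  proof
    assume xX: "x \<in> X"
    have step: "\<And>t y. t \<in> {s, s+1, s+2} \<Longrightarrow> x = t + y \<Longrightarrow> y \<in> X"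
    proof -
      fix t y assume t: "t \<in> {s, s+1, s+2}" and xy: "x = t + y"
      then have "t \<le> x" "x - t = y" by auto
      then show "y \<in> X" using cl xX t unfolding closed3_def by metis
    qed
    consider (a) m where "k1 = Suc m" | (b) m where "k2 = Suc m" | (c) m where "k3 = Suc m"
      using Suc.hyps(2) by (metis add_is_0 not0_implies_Suc)
    then show False
    proof cases
      case a
      have "x = s + (m*s + k2*(s+1) + k3*(s+2))" using Suc.prems a by simp
      then have "m*s + k2*(s+1) + k3*(s+2) \<in> X" using step by blast
      moreover have "n = m + k2 + k3" using Suc.hyps(2) a by simp
      ultimately show False using Suc.hyps(1) by blast
    next
      case b
      have "x = (s+1) + (k1*s + m*(s+1) + k3*(s+2))" using Suc.prems b by simp
      then have "k1*s + m*(s+1) + k3*(s+2) \<in> X" using step by blast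
      moreover have "n = k1 + m + k3" using Suc.hyps(2) b by simp
      ultimately show False using Suc.hyps(1) by blast
    next
      case c
      have "x = (s+2) + (k1*s + k2*(s+1) + m*(s+2))" using Suc.prems c by simp
      then have "k1*s + k2*(s+1) + m*(s+2) \<in> X" using step by blast
      moreover have "n = k1 + k2 + m" using Suc.hyps(2) c by simp
      ultimately show False using Suc.hyps(1) by blast
    qed
  qed
qed

lemma closed_sub_T:
  assumes cl: "closed3 s X" and pos: "\<And>x. x \<in> X \<Longrightarrow> 0 < x"
  shows "X \<subseteq> T s"
proof
  fix x assume x: "x \<in> X"
  have "\<not> repr3 s x" using repr3_not_in[OF cl pos] x unfolding repr3_def by blast
  then show "x \<in> T s" using T_repr pos x by blast
qed

lemma T_closed: "closed3 s (T s)"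
  unfolding closed3_def
proof (intro ballI impI)
  fix x t assume x: "x \<in> T s" and t: "t \<in> {s, s+1, s+2}" and tx: "t \<le> x"
  have nx: "\<not> repr3 s x" using x T_repr by blast
  show "x - t \<in> T s" unfolding T_repr
  proof
    show "0 < x - t"
    proof (rule ccontr)
      assume "\<not> 0 < x - t"
      then have "x = t" using tx by simp
      have "repr3 s t" unfolding repr3_def
      proof -
        consider "t = s" | "t = s+1" | "t = s+2" using t by auto
        then show "\<exists>k1 k2 k3. t = k1*s + k2*(s+1) + k3*(s+2)"
        proof cases
          case 1 then show ?thesis by (intro exI[of _ 1] exI[of _ 0]) simp
        next
          case 2 then show ?thesis by (intro exI[of _ 0] exI[of _ 1] exI[of _ 0]) simp
        next
          case 3 then show ?thesis by (intro exI[of _ 0] exI[of _ 0] exI[of _ 1]) simp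
        qed
      qed
      then have "repr3 s x" using \<open>x = t\<close> by simp
      then show False using nx by simp
    qed
    show "\<not> repr3 s (x - t)"
    proof
      assume "repr3 s (x - t)"
      then obtain k1 k2 k3 where k: "x - t = k1*s + k2*(s+1) + k3*(s+2)" unfolding repr3_def by blast
      have "repr3 s x" unfolding repr3_def
      proof -
        consider "t = s" | "t = s+1" | "t = s+2" using t by auto
        then show "\<exists>k1 k2 k3. x = k1*s + k2*(s+1) + k3*(s+2)"
        proof cases
          case 1 then have "x = (k1+1)*s + k2*(s+1) + k3*(s+2)" using k tx by (simp add: algebra_simps)
          then show ?thesis by blast
        next
          case 2 then have "x = k1*s + (k2+1)*(s+1) + k3*(s+2)" using k tx by (simp add: algebra_simps)
          then show ?thesis by blast
        next
          case 3 then have "x = k1*s + k2*(s+1) + (k3+1)*(s+2)" using k tx by (simp add: algebra_simps)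
          then show ?thesis by blast
        qed
      qed
      then show False using nx by simp
    qed
  qed
qed

lemma sss_iff:
  assumes s: "0 < s"
  shows "is_sss_core s mu \<longleftrightarrow> is_partition mu \<and> closed3 s (beta mu)"
proof
  assume a: "is_sss_core s mu"
  then have P: "is_partition mu" unfolding is_sss_core_def by simp
  have "\<And>t. t \<in> {s, s+1, s+2} \<Longrightarrow> (\<forall>x\<in>beta mu. t \<le> x \<longrightarrow> x - t \<in> beta mu)"
    using a core_iff[OF P] s unfolding is_sss_core_def by auto
  then show "is_partition mu \<and> closed3 s (beta mu)" using P unfolding closed3_def by blast
next
  assume a: "is_partition mu \<and> closed3 s (beta mu)"
  then have P: "is_partition mu" by simp
  have "\<And>t. t \<in> {s, s+1, s+2} \<Longrightarrow> is_core t mu"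
    using a core_iff[OF P] s unfolding closed3_def by auto
  then show "is_sss_core s mu" unfolding is_sss_core_def using P by simp
qed

lemma T_pos: "x \<in> T s \<Longrightarrow> 0 < x" unfolding T_def by simp

lemma kappa_spec:
  assumes s: "0 < s"
  shows "is_partition (kappa s) \<and> beta (kappa s) = T s"
proof -
  have ex: "\<exists>la. is_partition la \<and> beta la = T s"
    by (rule beta_exists[OF T_finite[OF s]]) (rule T_pos)
  have "\<exists>!la. is_partition la \<and> beta la = T s"
    using ex beta_inj by blast
  then show ?thesis unfolding kappa_def by (rule theI')
qed

lemma kappa_sss: "0 < s \<Longrightarrow> is_sss_core s (kappa s)"
  using sss_iff kappa_spec T_closed by simp


lemma RR_T_card: "0 < s \<Longrightarrow> card (RR s (T s) k) = s - 1 - 2*k"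
  using RR_T by simp

lemma RR_T_top: "0 < s \<Longrightarrow> RR s (T s) k = {s - k - card (RR s (T s) k)..<s-k}"
proof -
  assume s: "0 < s"
  show ?thesis
  proof (cases "k + 1 \<le> s - k")
    case True
    then show ?thesis using RR_T[OF s, of k] by simp
  next
    case False
    then show ?thesis using RR_T[OF s, of k] by simp
  qed
qed

lemma F2_T: "0 < s \<Longrightarrow> F2 (T s) = Phi s (\<lambda>k. s - 1 - 2*k)"
proof -
  assume s: "0 < s"
  have "F2 (T s) = Phi s (\<lambda>k. card (RR s (T s) k))"
    using F2_bound(2)[OF s order.refl] RR_T_top[OF s] by blast
  also have "(\<lambda>k. card (RR s (T s) k)) = (\<lambda>k. s - 1 - 2*k)" using RR_T_card[OF s] by auto
  finally show ?thesis .
qed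

lemma psize_F2:
  assumes P: "is_partition mu"
  shows "int (2 * psize mu) = F2 (beta mu)"
proof -
  have c: "card (beta mu) = length mu" by (rule card_beta[OF P])
  have "2 * \<Sum>(beta mu) = 2 * psize mu + length mu * (length mu - 1)" by (rule psize_beta[OF P])
  then have h: "int (2 * \<Sum>(beta mu)) = int (2 * psize mu) + int (length mu) * int (length mu - 1)" by simp
  show ?thesis
  proof (cases "length mu")
    case 0 then show ?thesis using h unfolding F2_def c by simp
  next
    case (Suc m)
    then have "int (length mu - 1) = int (length mu) - 1" by simp
    then show ?thesis using h unfolding F2_def c by simp
  qed
qed

lemma rows_eq:
  assumes s: "0 < s" and X: "X \<subseteq> T s" and Y: "Y \<subseteq> T s" and R: "\<And>k. k < s \<Longrightarrow> RR s X k = RR s Y k"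
  shows "X = Y"
proof -
  have one: "\<And>X Y x. X \<subseteq> T s \<Longrightarrow> (\<And>k. k < s \<Longrightarrow> RR s X k = RR s Y k) \<Longrightarrow> x \<in> X \<Longrightarrow> x \<in> Y"
  proof -
    fix X Y x assume X: "X \<subseteq> T s" and R: "\<And>k. k < s \<Longrightarrow> RR s X k = RR s Y k" and x: "x \<in> X"
    define k where "k = x div (s+1)"
    define p where "p = x mod (s+1)"
    have xe: "x = k*(s+1) + p" unfolding k_def p_def by (rule div_mult_mod_eq[symmetric])
    have kp: "k < p" "p + k < s" using T_char[OF s, of x] X x unfolding k_def p_def by auto
    have "p \<in> RR s X k" unfolding RR_def using kp x xe by simp
    then have "p \<in> RR s Y k" using R kp by simp
    then show "x \<in> Y" unfolding RR_def using xe by simp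
  qed
  show ?thesis using one[OF X R] one[OF Y] R by blast
qed

lemma core_bound:
  assumes s3: "3 \<le> s" and mu: "is_sss_core s mu"
  shows "F2 (beta mu) \<le> F2 (T s)"
    and "F2 (beta mu) = F2 (T s) \<Longrightarrow> beta mu = T s \<or> (odd s \<and> (\<forall>k<s. RR s (beta mu) k = {s - k - (s - 1 - 2*k - 1)..<s-k}))"
proof -
  have s: "0 < s" using s3 by simp
  have P: "is_partition mu" and cl: "closed3 s (beta mu)" using sss_iff[OF s] mu by auto
  have XT: "beta mu \<subseteq> T s" by (rule closed_sub_T[OF cl]) (rule beta_pos[OF P])
  define c where "c k = card (RR s (beta mu) k)" for k
  have H1: "\<And>k. c k \<le> s - 1 - 2*k" unfolding c_def by (rule RR_card_le)
  have H2: "\<And>k. 0 < c (Suc k) \<Longrightarrow> c (Suc k) + 2 \<le> c k"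
    unfolding c_def using RR_card_step[OF s XT cl] by simp
  note sm = seq_main[OF s3 H1 H2]
  note fb = F2_bound[OF s XT]
  have FT: "F2 (T s) = Phi s (\<lambda>k. s - 1 - 2*k)" by (rule F2_T[OF s])
  show "F2 (beta mu) \<le> F2 (T s)" using fb(1) sm(1) FT unfolding c_def by simp
  assume eq: "F2 (beta mu) = F2 (T s)"
  have e1: "F2 (beta mu) = Phi s c" using fb(1) sm(1) FT eq unfolding c_def by simp
  have e2: "Phi s c = Phi s (\<lambda>k. s - 1 - 2*k)" using e1 eq FT by simp
  have top: "\<forall>k<s. RR s (beta mu) k = {s - k - c k..<s-k}" using fb(2) e1 unfolding c_def by simp
  have disj: "(\<forall>k. c k = s - 1 - 2*k) \<or> (odd s \<and> (\<forall>k. c k = s - 1 - 2*k - 1))"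
    apply (rule seq_main(2)[where c=c and s=s])
       apply (rule s3)
      apply (rule H1)
     apply (rule H2, assumption)
    apply (rule e2)
    done
  from disj show "beta mu = T s \<or> (odd s \<and> (\<forall>k<s. RR s (beta mu) k = {s - k - (s - 1 - 2*k - 1)..<s-k}))"
  proof
    assume h: "\<forall>k. c k = s - 1 - 2*k"
    have "\<And>k. k < s \<Longrightarrow> RR s (beta mu) k = RR s (T s) k"
      using top h RR_T_top[OF s] RR_T_card[OF s] by simp
    then show ?thesis using rows_eq[OF s XT order.refl] by blast
  next
    assume h: "odd s \<and> (\<forall>k. c k = s - 1 - 2*k - 1)"
    then show ?thesis using top by simp
  qed
qed


lemma beta_sub_T: "0 < s \<Longrightarrow> is_sss_core s mu \<Longrightarrow> beta mu \<subseteq> T s"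
  using sss_iff closed_sub_T beta_pos by metis

lemma card_T:
  assumes s: "0 < s"
  shows "int (card (T s)) = int (s div 2) * (int s - int (s div 2))"
proof -
  define A where "A = s div 2"
  have sA: "s \<le> 2 * A + 1" "2 * A \<le> s" unfolding A_def by presburger+
  have "card (T s) = (\<Sum>k<s. card (RR s (T s) k))" using sum_rows(2)[OF s order.refl] .
  also have "\<dots> = (\<Sum>k<s. s - 1 - 2*k)" using RR_T_card[OF s] by simp
  also have "\<dots> = (\<Sum>k<A. s - 1 - 2*k)"
    by (rule sum.mono_neutral_right) (use sA in auto)
  finally have "int (card (T s)) = (\<Sum>k<A. int (s - 1 - 2*k))" by simp
  also have "\<dots> = (\<Sum>k<A. int s - 1 - 2 * int k)"
    by (rule sum.cong) (use sA in auto)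
  also have "\<dots> = int A * (int s - 1) - 2 * (\<Sum>k<A. int k)"
    by (simp add: sum_subtractf sum_distrib_left)
  also have "\<dots> = int A * (int s - int A)" using S1[of A] by (simp add: algebra_simps)
  finally show ?thesis unfolding A_def .
qed

lemma max_T:
  assumes s3: "3 \<le> s"
  shows "(s div 2) * s - 1 \<in> T s" and "\<And>x. x \<in> T s \<Longrightarrow> x \<le> (s div 2) * s - 1"
proof -
  define A where "A = s div 2"
  have s: "0 < s" using s3 by simp
  have sA: "s \<le> 2 * A + 1" "2 * A \<le> s" unfolding A_def by presburger+
  have A1: "1 \<le> A" using s3 unfolding A_def by simp
  have "(A - 1) * (s + 1) + (s - A) \<in> T s" by (rule vv_in_T[OF s]) (use sA A1 in auto)
  moreover have "(A - 1) * (s + 1) + (s - A) = A * s - 1"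
  proof -
    obtain B where B: "A = Suc B" using A1 by (cases A) auto
    show ?thesis unfolding B using sA B by (simp add: algebra_simps)
  qed
  ultimately show "(s div 2) * s - 1 \<in> T s" unfolding A_def by simp
  fix x assume x: "x \<in> T s"
  define k where "k = x div (s+1)"
  define p where "p = x mod (s+1)"
  have xe: "x = k*(s+1) + p" unfolding k_def p_def by (rule div_mult_mod_eq[symmetric])
  have kp: "k < p" "p + k < s" using T_char[OF s, of x] x unfolding k_def p_def by auto
  have kA: "k + 1 \<le> A" using kp sA by linarith
  have "x \<le> k * (s+1) + (s - 1 - k)" using xe kp by simp
  also have "\<dots> = (k+1) * s - 1" using kp by (simp add: algebra_simps)
  also have "(k+1) * s \<le> A * s" using kA by (rule mult_le_mono1)
  then have "(k+1) * s - 1 \<le> A * s - 1" by simp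
  finally show "x \<le> (s div 2) * s - 1" unfolding A_def .
qed

lemma kappa_not_selfconj:
  assumes s3: "3 \<le> s" and od: "odd s"
  shows "kappa s \<noteq> conjugate (kappa s)"
proof
  assume eq: "kappa s = conjugate (kappa s)"
  have s: "0 < s" using s3 by simp
  define A where "A = s div 2"
  have s2: "s = 2 * A + 1" unfolding A_def using od by simp
  have A1: "1 \<le> A" using s3 unfolding A_def by simp
  have P: "is_partition (kappa s)" and B: "beta (kappa s) = T s" using kappa_spec[OF s] by auto
  define n where "n = length (kappa s)"
  have nT: "n = card (T s)" unfolding n_def using card_beta[OF P] B by simp
  have nA: "int n = int A * (int A + 1)" using card_T[OF s] nT s2 unfolding A_def by simp
  have "0 < int A * (int A + 1)" using A1 by simp
  then have n0: "0 < n" using nA by linarith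
  have ne: "kappa s \<noteq> []" using n0 n_def by auto
  have bt0: "bt (kappa s) 0 = A * s - 1"
  proof (rule antisym)
    have "bt (kappa s) 0 \<in> beta (kappa s)" unfolding beta_bt[OF P] using n0 n_def by auto
    then show "bt (kappa s) 0 \<le> A * s - 1" using max_T(2)[OF s3] B unfolding A_def by simp
    have "A * s - 1 \<in> beta (kappa s)" using max_T(1)[OF s3] B unfolding A_def by simp
    then obtain i where i: "i < n" "A * s - 1 = bt (kappa s) i" unfolding beta_bt[OF P] n_def by auto
    show "A * s - 1 \<le> bt (kappa s) 0"
    proof (cases "i = 0")
      case True then show ?thesis using i by simp
    next
      case False then show ?thesis using i bt_strict[OF P, of 0 i] n_def by simp
    qed
  qed
  have l0: "length (conjugate (kappa s)) = kappa s ! 0" using conj_len[of "kappa s"] ne by simp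
  then have k0: "kappa s ! 0 = n" using eq n_def by simp
  have "bt (kappa s) 0 = kappa s ! 0 + (n - 1)" unfolding bt_def n_def by simp
  then have "A * s - 1 = n + (n - 1)" using bt0 k0 by simp
  moreover have "0 < A * s" using A1 s by simp
  ultimately have "A * s = n + n" using n0 by linarith
  then have "int (A * s) = int (n + n)" by simp
  then have "int A * int s = 2 * int n" by simp
  then have "int A * (2 * int A + 1) = 2 * (int A * (int A + 1))" using nA s2 by simp
  then have "int A = 0" by (simp add: algebra_simps)
  then show False using A1 by simp
qed

theorem theorem3p4:
  fixes s :: nat
  assumes "s \<ge> 3"
  shows "is_partition (kappa s) \<and> beta (kappa s) = T s
     \<and> is_sss_core s (kappa s)
     \<and> (\<forall>mu. is_sss_core s mu \<longrightarrow> psize mu \<le> psize (kappa s))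
     \<and> (even s \<longrightarrow> (\<forall>mu. is_sss_core s mu \<and> psize mu = psize (kappa s) \<longrightarrow> mu = kappa s)
                     \<and> conjugate (kappa s) = kappa s)
     \<and> (odd s \<longrightarrow> kappa s \<noteq> conjugate (kappa s)
                     \<and> {mu. is_sss_core s mu \<and> psize mu = psize (kappa s)} = {kappa s, conjugate (kappa s)})"
proof -
  have s3: "3 \<le> s" using assms .
  have s: "0 < s" using s3 by simp
  have KS: "is_partition (kappa s) \<and> beta (kappa s) = T s" by (rule kappa_spec[OF s])
  then have P: "is_partition (kappa s)" and B: "beta (kappa s) = T s" by auto
  have Ksss: "is_sss_core s (kappa s)" by (rule kappa_sss[OF s])
  have FK: "int (2 * psize (kappa s)) = F2 (T s)" using psize_F2[OF P] B by simp
  have bound: "\<forall>mu. is_sss_core s mu \<longrightarrow> psize mu \<le> psize (kappa s)"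
  proof (intro allI impI)
    fix mu assume mu: "is_sss_core s mu"
    then have Pm: "is_partition mu" unfolding is_sss_core_def by simp
    have "int (2 * psize mu) \<le> int (2 * psize (kappa s))"
      using psize_F2[OF Pm] core_bound(1)[OF s3 mu] FK by simp
    then show "psize mu \<le> psize (kappa s)" by simp
  qed
  have maxc: "\<And>mu. is_sss_core s mu \<Longrightarrow> psize mu = psize (kappa s) \<Longrightarrow>
      beta mu = T s \<or> (odd s \<and> (\<forall>k<s. RR s (beta mu) k = {s - k - (s - 1 - 2*k - 1)..<s-k}))"
  proof -
    fix mu assume mu: "is_sss_core s mu" and eqp: "psize mu = psize (kappa s)"
    then have Pm: "is_partition mu" unfolding is_sss_core_def by simp
    have "F2 (beta mu) = F2 (T s)" using psize_F2[OF Pm] FK eqp by simp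
    then show "beta mu = T s \<or> (odd s \<and> (\<forall>k<s. RR s (beta mu) k = {s - k - (s - 1 - 2*k - 1)..<s-k}))"
      by (rule core_bound(2)[OF s3 mu])
  qed
  have Csss: "is_sss_core s (conjugate (kappa s))" by (rule conj_sss[OF Ksss])
  have Cps: "psize (conjugate (kappa s)) = psize (kappa s)" by (rule conj_psize[OF P])
  have CP: "is_partition (conjugate (kappa s))" using Csss unfolding is_sss_core_def by simp
  have evenpart: "even s \<longrightarrow> (\<forall>mu. is_sss_core s mu \<and> psize mu = psize (kappa s) \<longrightarrow> mu = kappa s)
                     \<and> conjugate (kappa s) = kappa s"
  proof (intro impI)
    assume ev: "even s"
    have uniq: "\<And>mu. is_sss_core s mu \<Longrightarrow> psize mu = psize (kappa s) \<Longrightarrow> mu = kappa s"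
    proof -
      fix mu assume mu: "is_sss_core s mu" and eqp: "psize mu = psize (kappa s)"
      have Pm: "is_partition mu" using mu unfolding is_sss_core_def by simp
      have "beta mu = T s" using maxc[OF mu eqp] ev by auto
      then show "mu = kappa s" using beta_inj[OF Pm P] B by simp
    qed
    show "(\<forall>mu. is_sss_core s mu \<and> psize mu = psize (kappa s) \<longrightarrow> mu = kappa s) \<and> conjugate (kappa s) = kappa s"
      using uniq Csss Cps by blast
  qed
  have oddpart: "odd s \<longrightarrow> kappa s \<noteq> conjugate (kappa s)
                     \<and> {mu. is_sss_core s mu \<and> psize mu = psize (kappa s)} = {kappa s, conjugate (kappa s)}"
  proof (intro impI conjI)
    assume od: "odd s"
    show ne: "kappa s \<noteq> conjugate (kappa s)" by (rule kappa_not_selfconj[OF s3 od])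
    have CT: "beta (conjugate (kappa s)) \<noteq> T s"
    proof
      assume "beta (conjugate (kappa s)) = T s"
      then have "conjugate (kappa s) = kappa s" using beta_inj[OF CP P] B by simp
      then show False using ne by simp
    qed
    have Crows: "\<forall>k<s. RR s (beta (conjugate (kappa s))) k = {s - k - (s - 1 - 2*k - 1)..<s-k}"
      using maxc[OF Csss Cps] CT by auto
    show "{mu. is_sss_core s mu \<and> psize mu = psize (kappa s)} = {kappa s, conjugate (kappa s)}"
    proof
      show "{mu. is_sss_core s mu \<and> psize mu = psize (kappa s)} \<subseteq> {kappa s, conjugate (kappa s)}"
      proof
        fix mu assume "mu \<in> {mu. is_sss_core s mu \<and> psize mu = psize (kappa s)}"
        then have mu: "is_sss_core s mu" and eqp: "psize mu = psize (kappa s)" by auto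
        have Pm: "is_partition mu" using mu unfolding is_sss_core_def by simp
        show "mu \<in> {kappa s, conjugate (kappa s)}"
        proof (cases "beta mu = T s")
          case True
          then have "mu = kappa s" using beta_inj[OF Pm P] B by simp
          then show ?thesis by simp
        next
          case False
          then have rows: "\<forall>k<s. RR s (beta mu) k = {s - k - (s - 1 - 2*k - 1)..<s-k}"
            using maxc[OF mu eqp] by auto
          have "beta mu = beta (conjugate (kappa s))"
            by (rule rows_eq[OF s beta_sub_T[OF s mu] beta_sub_T[OF s Csss]]) (use rows Crows in auto)
          then have "mu = conjugate (kappa s)" using beta_inj[OF Pm CP] by simp
          then show ?thesis by simp
        qed
      qed
      show "{kappa s, conjugate (kappa s)} \<subseteq> {mu. is_sss_core s mu \<and> psize mu = psize (kappa s)}"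
        using Ksss Csss Cps by auto
    qed
  qed
  show ?thesis using KS Ksss bound evenpart oddpart by blast
qed


end
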